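(* Let $U=[a_1,b_1]\cup\dots\cup[a_k,b_k]\subseteq\mathbb{R}$ with $a_1\le b_1<a_2\le b_2<\dots<a_k\le b_k$, and let $S=\{x-a_1,\ (x-a_2)(x-b_1),\ \dots,\ (x-a_k)(x-b_{k-1}),\ b_k-x\}\subseteq\mathbb{R}[x]$. Then in $\mathbb{R}[x]$ the preordering generated by $S$ equals the quadratic module generated by $S$, i.e. $T_S=M_S$. Consequently the same equality $T_S=M_S$ holds for the preordering and quadratic module generated by $S$ in $\mathbb{R}[x,y]$.
   Context: For a finite set $S=\{s_1,\dots,s_m\}$ in a polynomial ring $A$ (here $A=\mathbb{R}[x]$ or $\mathbb{R}[x,y]$), the quadratic module $M_S$ generated by $S$ is the set of all $\sigma_0+\sigma_1s_1+\dots+\sigma_ms_m$ with each $\sigma_i$ a sum of squares of elements of $A$; the preordering $T_S$ generated by $S$ is the set of all $\sum_{e\in\{0,1\}^m}\sigma_e s_1^{e_1}\cdots s_m^{e_m}$ with each $\sigma_e$ a sum of squares in $A$. The set $S$ above is called the natural choice of generators for $U$. *)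

theory Defs
  imports "HOL-Computational_Algebra.Polynomial"
begin

definition sos :: "'a::comm_ring_1 set" where
  "sos = {s. \<exists>xs. s = (\<Sum>x\<leftarrow>xs. x ^ 2)}"

definition qmodule :: "'a::comm_ring_1 set \<Rightarrow> 'a set" where
  "qmodule S = {\<sigma>0 + (\<Sum>s\<in>S. \<sigma> s * s) | \<sigma>0 \<sigma>. \<sigma>0 \<in> sos \<and> (\<forall>s\<in>S. \<sigma> s \<in> sos)}"

definition preordering :: "'a::comm_ring_1 set \<Rightarrow> 'a set" where
  "preordering S = {(\<Sum>E\<in>Pow S. \<sigma> E * (\<Prod>s\<in>E. s)) | \<sigma>. \<forall>E\<in>Pow S. \<sigma> E \<in> sos}"

definition nat_gens :: "nat \<Rightarrow> (nat \<Rightarrow> real) \<Rightarrow> (nat \<Rightarrow> real) \<Rightarrow> real poly set" where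
  "nat_gens k a b =
     {[:- a 1, 1:]} \<union> {[:- a i, 1:] * [:- b (i - 1), 1:] | i. 2 \<le> i \<and> i \<le> k} \<union> {[:b k, -1:]}"

end

theory Submission
  imports Defs "HOL-Analysis.Analysis"
begin


lemma sos_0: "0 \<in> sos"
  unfolding sos_def by (rule CollectI, rule exI[of _ "[]"], simp)

lemma sos_sq: "x ^ 2 \<in> sos"
  unfolding sos_def by (rule CollectI, rule exI[of _ "[x]"], simp)

lemma sos_1: "1 \<in> sos"
  using sos_sq[of 1] by simp

lemma sos_add: "a \<in> sos \<Longrightarrow> b \<in> sos \<Longrightarrow> a + b \<in> sos"
  unfolding sos_def
proof clarify
  fix xs ys :: "'a list"
  show "\<exists>zs. (\<Sum>x\<leftarrow>xs. x ^ 2) + (\<Sum>x\<leftarrow>ys. x ^ 2) = (\<Sum>x\<leftarrow>zs. x ^ 2)"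
    by (rule exI[of _ "xs @ ys"], simp)
qed

lemma sos_sq_mult: "a \<in> sos \<Longrightarrow> x ^ 2 * a \<in> sos"
  unfolding sos_def
proof clarify
  fix ys :: "'a list"
  show "\<exists>zs. x ^ 2 * (\<Sum>y\<leftarrow>ys. y ^ 2) = (\<Sum>z\<leftarrow>zs. z ^ 2)"
    by (rule exI[of _ "map (\<lambda>y. x * y) ys"], induct ys, simp_all add: distrib_left power_mult_distrib)
qed

lemma sos_mult: "a \<in> sos \<Longrightarrow> b \<in> sos \<Longrightarrow> a * b \<in> sos"
proof -
  assume a: "a \<in> sos" and b: "b \<in> sos"
  from a obtain xs where xs: "a = (\<Sum>x\<leftarrow>xs. x ^ 2)" unfolding sos_def by auto
  have "(\<Sum>x\<leftarrow>xs. x ^ 2) * b \<in> sos"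
    by (induct xs) (simp_all add: sos_0 distrib_right sos_add sos_sq_mult b)
  thus ?thesis using xs by simp
qed

lemma sos_sum: "finite I \<Longrightarrow> (\<And>i. i \<in> I \<Longrightarrow> f i \<in> sos) \<Longrightarrow> sum f I \<in> sos"
  by (induct I rule: finite_induct) (auto simp: sos_0 sos_add)

lemma qmoduleI: "\<sigma>0 \<in> sos \<Longrightarrow> (\<And>s. s \<in> S \<Longrightarrow> \<sigma> s \<in> sos) \<Longrightarrow> p = \<sigma>0 + (\<Sum>s\<in>S. \<sigma> s * s) \<Longrightarrow> p \<in> qmodule S"
  unfolding qmodule_def by blast

lemma qmoduleE: "p \<in> qmodule S \<Longrightarrow> (\<And>\<sigma>0 \<sigma>. \<sigma>0 \<in> sos \<Longrightarrow> (\<forall>s\<in>S. \<sigma> s \<in> sos) \<Longrightarrow> p = \<sigma>0 + (\<Sum>s\<in>S. \<sigma> s * s) \<Longrightarrow> P) \<Longrightarrow> P"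
  unfolding qmodule_def by blast

lemma qmodule_add: "p \<in> qmodule S \<Longrightarrow> q \<in> qmodule S \<Longrightarrow> p + q \<in> qmodule S"
proof -
  assume h: "p \<in> qmodule S" "q \<in> qmodule S"
  obtain \<sigma>0 \<sigma> where a: "\<sigma>0 \<in> sos" "\<forall>s\<in>S. \<sigma> s \<in> sos" "p = \<sigma>0 + (\<Sum>s\<in>S. \<sigma> s * s)"
    using h(1) unfolding qmodule_def by blast
  obtain \<tau>0 \<tau> where b: "\<tau>0 \<in> sos" "\<forall>s\<in>S. \<tau> s \<in> sos" "q = \<tau>0 + (\<Sum>s\<in>S. \<tau> s * s)"
    using h(2) unfolding qmodule_def by blast
  show ?thesis
    by (rule qmoduleI[of "\<sigma>0 + \<tau>0" _ "\<lambda>s. \<sigma> s + \<tau> s"])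
       (use a b in \<open>auto simp: sos_add sum.distrib distrib_right\<close>)
qed

lemma qmodule_sos_mult: "a \<in> sos \<Longrightarrow> p \<in> qmodule S \<Longrightarrow> a * p \<in> qmodule S"
proof -
  assume aa: "a \<in> sos" "p \<in> qmodule S"
  then obtain \<sigma>0 \<sigma> where a: "\<sigma>0 \<in> sos" "\<forall>s\<in>S. \<sigma> s \<in> sos" "p = \<sigma>0 + (\<Sum>s\<in>S. \<sigma> s * s)"
    unfolding qmodule_def by blast
  show ?thesis
    by (rule qmoduleI[of "a * \<sigma>0" _ "\<lambda>s. a * \<sigma> s"])
       (use a aa in \<open>auto simp: sos_mult sum_distrib_left distrib_left mult.assoc\<close>)
qed

lemma qmodule_sos: "a \<in> sos \<Longrightarrow> a \<in> qmodule S"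
  by (rule qmoduleI[of a _ "\<lambda>_. 0"]) (auto simp: sos_0)

lemma qmodule_0: "0 \<in> qmodule S"
  by (rule qmodule_sos[OF sos_0])

lemma sum_delta_mult:
  fixes f :: "'b \<Rightarrow> 'a::comm_ring_1"
  shows "finite S \<Longrightarrow> s \<in> S \<Longrightarrow> (\<Sum>t\<in>S. (if t = s then 1 else 0) * f t) = f s"
proof -
  assume "finite S" "s \<in> S"
  have "(\<Sum>t\<in>S. (if t = s then 1 else 0) * f t) = (\<Sum>t\<in>S. if t = s then f t else 0)"
    by (rule sum.cong) auto
  also have "\<dots> = f s" using \<open>finite S\<close> \<open>s \<in> S\<close> by (simp add: sum.delta')
  finally show ?thesis .
qed

lemma qmodule_gen: "finite S \<Longrightarrow> s \<in> S \<Longrightarrow> s \<in> qmodule S"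
  by (rule qmoduleI[of 0 _ "\<lambda>t. if t = s then 1 else 0"])
     (auto simp: sos_0 sos_1 sum_delta_mult[where f="\<lambda>t. t"])

lemma qmodule_sum: "finite I \<Longrightarrow> (\<And>i. i \<in> I \<Longrightarrow> f i \<in> qmodule S) \<Longrightarrow> sum f I \<in> qmodule S"
  by (induct I rule: finite_induct) (auto simp: qmodule_0 qmodule_add)

lemma qmodule_gen_mult:
  assumes fin: "finite S" and st: "\<And>t. t \<in> S \<Longrightarrow> s * t \<in> qmodule S" and s: "s \<in> S"
    and p: "p \<in> qmodule S"
  shows "s * p \<in> qmodule S"
proof -
  from p obtain \<sigma>0 \<sigma> where a: "\<sigma>0 \<in> sos" "\<forall>s\<in>S. \<sigma> s \<in> sos" "p = \<sigma>0 + (\<Sum>s\<in>S. \<sigma> s * s)"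
    unfolding qmodule_def by blast
  have "s * p = \<sigma>0 * s + (\<Sum>t\<in>S. \<sigma> t * (s * t))"
    by (simp add: a(3) distrib_left sum_distrib_left ac_simps)
  also have "\<dots> \<in> qmodule S"
    by (rule qmodule_add, rule qmodule_sos_mult[OF a(1) qmodule_gen[OF fin s]],
        rule qmodule_sum[OF fin], rule qmodule_sos_mult, use a st in auto)
  finally show ?thesis .
qed

lemma qmodule_prod:
  assumes fin: "finite S" and pw: "\<And>s t. s \<in> S \<Longrightarrow> t \<in> S \<Longrightarrow> s * t \<in> qmodule S"
    and E: "E \<subseteq> S"
  shows "(\<Prod>s\<in>E. s) \<in> qmodule S"
proof -
  have "finite E" using E fin finite_subset by blast
  thus ?thesis using E
  proof (induct E rule: finite_induct)
    case empty thus ?case by (simp add: qmodule_sos sos_1)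
  next
    case (insert s E)
    hence sS: "s \<in> S" and ES: "E \<subseteq> S" by auto
    have "s * (\<Prod>s\<in>E. s) \<in> qmodule S"
      by (rule qmodule_gen_mult[OF fin _ sS insert(3)[OF ES]], rule pw[OF sS], simp)
    thus ?case using insert(1,2) by simp
  qed
qed

lemma preorderingI: "(\<And>E. E \<in> Pow S \<Longrightarrow> \<sigma> E \<in> sos) \<Longrightarrow> p = (\<Sum>E\<in>Pow S. \<sigma> E * (\<Prod>s\<in>E. s)) \<Longrightarrow> p \<in> preordering S"
  unfolding preordering_def by blast

lemma preorderingE: "p \<in> preordering S \<Longrightarrow> (\<And>\<sigma>. (\<forall>E\<in>Pow S. \<sigma> E \<in> sos) \<Longrightarrow> p = (\<Sum>E\<in>Pow S. \<sigma> E * (\<Prod>s\<in>E. s)) \<Longrightarrow> P) \<Longrightarrow> P"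
  unfolding preordering_def by blast

lemma preordering_add: "p \<in> preordering S \<Longrightarrow> q \<in> preordering S \<Longrightarrow> p + q \<in> preordering S"
proof -
  assume h: "p \<in> preordering S" "q \<in> preordering S"
  obtain \<sigma> where a: "\<forall>E\<in>Pow S. \<sigma> E \<in> sos" "p = (\<Sum>E\<in>Pow S. \<sigma> E * (\<Prod>s\<in>E. s))"
    using h(1) unfolding preordering_def by blast
  obtain \<tau> where b: "\<forall>E\<in>Pow S. \<tau> E \<in> sos" "q = (\<Sum>E\<in>Pow S. \<tau> E * (\<Prod>s\<in>E. s))"
    using h(2) unfolding preordering_def by blast
  show ?thesis
    by (rule preorderingI[of _ "\<lambda>E. \<sigma> E + \<tau> E"])
       (use a b in \<open>auto simp: sos_add sum.distrib distrib_right\<close>)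
qed

lemma preordering_sos_mult: "a \<in> sos \<Longrightarrow> p \<in> preordering S \<Longrightarrow> a * p \<in> preordering S"
proof -
  assume aa: "a \<in> sos" "p \<in> preordering S"
  then obtain \<sigma> where a: "\<forall>E\<in>Pow S. \<sigma> E \<in> sos" "p = (\<Sum>E\<in>Pow S. \<sigma> E * (\<Prod>s\<in>E. s))"
    unfolding preordering_def by blast
  show ?thesis
    by (rule preorderingI[of _ "\<lambda>E. a * \<sigma> E"])
       (use a aa in \<open>auto simp: sos_mult sum_distrib_left mult.assoc\<close>)
qed

lemma preordering_single: "finite S \<Longrightarrow> E0 \<in> Pow S \<Longrightarrow> (\<Prod>s\<in>E0. s) \<in> preordering S"
  by (rule preorderingI[of _ "\<lambda>E. if E = E0 then 1 else 0"])
     (auto simp: sos_0 sos_1 sum_delta_mult[where f="\<lambda>E. \<Prod>s\<in>E. s"])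

lemma preordering_sos: "finite S \<Longrightarrow> a \<in> sos \<Longrightarrow> a \<in> preordering S"
  using preordering_sos_mult[of a 1 S] preordering_single[of S "{}"] by simp

lemma preordering_gen: "finite S \<Longrightarrow> s \<in> S \<Longrightarrow> s \<in> preordering S"
  using preordering_single[of S "{s}"] by simp

lemma preordering_sum:
  assumes S: "finite S"
  shows "finite I \<Longrightarrow> (\<And>i. i \<in> I \<Longrightarrow> f i \<in> preordering S) \<Longrightarrow> sum f I \<in> preordering S"
  by (induct I rule: finite_induct) (auto simp: preordering_sos[OF S] sos_0 preordering_add)

lemma qmodule_sub_preordering: "finite S \<Longrightarrow> qmodule S \<subseteq> preordering S"
proof
  fix p assume fin: "finite S" and "p \<in> qmodule S"
  then obtain \<sigma>0 \<sigma> where a: "\<sigma>0 \<in> sos" "\<forall>s\<in>S. \<sigma> s \<in> sos" "p = \<sigma>0 + (\<Sum>s\<in>S. \<sigma> s * s)"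
    unfolding qmodule_def by blast
  show "p \<in> preordering S" unfolding a(3)
    by (rule preordering_add, rule preordering_sos[OF fin a(1)], rule preordering_sum[OF fin fin],
        rule preordering_sos_mult, use a fin preordering_gen in auto)
qed

lemma preordering_sub_qmodule:
  assumes fin: "finite S" and pw: "\<And>s t. s \<in> S \<Longrightarrow> t \<in> S \<Longrightarrow> s * t \<in> qmodule S"
  shows "preordering S \<subseteq> qmodule S"
proof
  fix p assume "p \<in> preordering S"
  then obtain \<sigma> where a: "\<forall>E\<in>Pow S. \<sigma> E \<in> sos" "p = (\<Sum>E\<in>Pow S. \<sigma> E * (\<Prod>s\<in>E. s))"
    unfolding preordering_def by blast
  show "p \<in> qmodule S" unfolding a(2)
    by (rule qmodule_sum, use fin in simp, rule qmodule_sos_mult, use a in simp,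
        rule qmodule_prod[OF fin pw], auto)
qed

lemma preordering_eq_qmodule:
  assumes fin: "finite S" and pw: "\<And>s t. s \<in> S \<Longrightarrow> t \<in> S \<Longrightarrow> s * t \<in> qmodule S"
  shows "preordering S = qmodule S"
  using preordering_sub_qmodule[OF assms] qmodule_sub_preordering[OF fin] by blast

lemma const_add: "[:a + b:] = [:a:] + [:b:]"
  by simp

lemma const_mult: "[:a:] * [:b:] = [:a * b:]"
  by (simp add: mult.commute)

lemma const_power: "[:a:] ^ n = [:a ^ n:]"
  by (induct n) (simp_all add: const_mult mult.commute)

lemma pCons_0_sum: "finite I \<Longrightarrow> [:sum f I:] = (\<Sum>i\<in>I. [:f i:])"
  by (induct I rule: finite_induct) (simp_all add: const_add)

lemma sos_const: "a \<in> sos \<Longrightarrow> [:a:] \<in> sos"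
proof -
  assume "a \<in> sos"
  then obtain xs where xs: "a = (\<Sum>x\<leftarrow>xs. x ^ 2)" unfolding sos_def by auto
  have "[:a:] = (\<Sum>x\<leftarrow>map (\<lambda>x. [:x:]) xs. x ^ 2)"
    unfolding xs by (induct xs) (simp_all add: const_add const_power)
  thus ?thesis unfolding sos_def by blast
qed

lemma qmodule_const:
  fixes S :: "'a::comm_ring_1 poly set"
  assumes "p \<in> qmodule S"
  shows "[:p:] \<in> qmodule ((\<lambda>p. [:p:]) ` S)"
proof -
  from assms obtain \<sigma>0 \<sigma> where a: "\<sigma>0 \<in> sos" "\<forall>s\<in>S. \<sigma> s \<in> sos" "p = \<sigma>0 + (\<Sum>s\<in>S. \<sigma> s * s)"
    unfolding qmodule_def by blast
  have inj: "inj_on (\<lambda>p. [:p:]) S" by (auto simp: inj_on_def)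
  show ?thesis
  proof (rule qmoduleI[of "[:\<sigma>0:]" _ "\<lambda>t. [:\<sigma> (coeff t 0):]"])
    show "[:\<sigma>0:] \<in> sos" using a sos_const by blast
    show "\<And>s. s \<in> (\<lambda>p. [:p:]) ` S \<Longrightarrow> [:\<sigma> (coeff s 0):] \<in> sos" using a by (auto intro!: sos_const)
    have "(\<Sum>t\<in>(\<lambda>p. [:p:]) ` S. [:\<sigma> (coeff t 0):] * t) = (\<Sum>s\<in>S. [:\<sigma> s:] * [:s:])"
      by (subst sum.reindex[OF inj]) (simp only: o_def coeff_pCons_0)
    also have "\<dots> = (\<Sum>s\<in>S. [:\<sigma> s * s:])" by (rule sum.cong) (simp_all add: mult.commute)
    finally have calc: "(\<Sum>t\<in>(\<lambda>p. [:p:]) ` S. [:\<sigma> (coeff t 0):] * t) = (\<Sum>s\<in>S. [:\<sigma> s * s:])" .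
    have e: "[:p:] = [:\<sigma>0:] + (\<Sum>s\<in>S. [:\<sigma> s * s:])"
    proof (cases "finite S")
      case True thus ?thesis unfolding a(3) const_add by (simp only: pCons_0_sum)
    next
      case False thus ?thesis unfolding a(3) by simp
    qed
    show "[:p:] = [:\<sigma>0:] + (\<Sum>t\<in>(\<lambda>p. [:p:]) ` S. [:\<sigma> (coeff t 0):] * t)"
      by (subst calc) (rule e)
  qed
qed


lemma poly_ext: "(\<And>x. poly p x = poly q x) \<Longrightarrow> p = (q::real poly)"
  using poly_eq_poly_eq_iff[of p q] by auto

lemma sos_const_nonneg: "(c::real) \<ge> 0 \<Longrightarrow> [:c:] \<in> sos"
proof -
  assume "c \<ge> 0"
  hence "[:c:] = [:sqrt c:] ^ 2" by (simp add: const_power)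
  thus ?thesis using sos_sq by metis
qed

definition mlc :: "real \<Rightarrow> real \<Rightarrow> real poly set" where
  "mlc A Z = {s0 + s1 * [:-A,1:] + s2 * [:Z,-1:] | s0 s1 s2. s0 \<in> sos \<and> s1 \<in> sos \<and> s2 \<in> sos}"

lemma mlcI: "s0 \<in> sos \<Longrightarrow> s1 \<in> sos \<Longrightarrow> s2 \<in> sos \<Longrightarrow> p = s0 + s1 * [:-A,1:] + s2 * [:Z,-1:] \<Longrightarrow> p \<in> mlc A Z"
  unfolding mlc_def by blast

lemma mlc_add: "p \<in> mlc A Z \<Longrightarrow> q \<in> mlc A Z \<Longrightarrow> p + q \<in> mlc A Z"
proof -
  assume h: "p \<in> mlc A Z" "q \<in> mlc A Z"
  obtain s0 s1 s2 where a: "s0 \<in> sos" "s1 \<in> sos" "s2 \<in> sos" "p = s0 + s1 * [:-A,1:] + s2 * [:Z,-1:]"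
    using h(1) unfolding mlc_def by blast
  obtain t0 t1 t2 where b: "t0 \<in> sos" "t1 \<in> sos" "t2 \<in> sos" "q = t0 + t1 * [:-A,1:] + t2 * [:Z,-1:]"
    using h(2) unfolding mlc_def by blast
  show ?thesis
  proof (rule mlcI[of "s0 + t0" "s1 + t1" "s2 + t2"])
    show "s0 + t0 \<in> sos" "s1 + t1 \<in> sos" "s2 + t2 \<in> sos" using a b by (simp_all add: sos_add)
    show "p + q = s0 + t0 + (s1 + t1) * [:- A, 1:] + (s2 + t2) * [:Z, - 1:]"
      by (rule poly_ext) (simp add: a(4) b(4) algebra_simps)
  qed
qed

lemma mlc_sos_mult: "a \<in> sos \<Longrightarrow> p \<in> mlc A Z \<Longrightarrow> a * p \<in> mlc A Z"
proof -
  assume h: "a \<in> sos" "p \<in> mlc A Z"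
  obtain s0 s1 s2 where b: "s0 \<in> sos" "s1 \<in> sos" "s2 \<in> sos" "p = s0 + s1 * [:-A,1:] + s2 * [:Z,-1:]"
    using h(2) unfolding mlc_def by blast
  show ?thesis
  proof (rule mlcI[of "a * s0" "a * s1" "a * s2"])
    show "a * s0 \<in> sos" "a * s1 \<in> sos" "a * s2 \<in> sos" using h b by (simp_all add: sos_mult)
    show "a * p = a * s0 + a * s1 * [:- A, 1:] + a * s2 * [:Z, - 1:]"
      by (rule poly_ext) (simp add: b(4) algebra_simps)
  qed
qed

lemma mlc_sos: "a \<in> sos \<Longrightarrow> a \<in> mlc A Z"
  by (rule mlcI[of a 0 0]) (simp_all add: sos_0)

lemma mlc_l1: "[:-A,1:] \<in> mlc A Z"
  by (rule mlcI[of 0 1 0]) (simp_all add: sos_0 sos_1)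

lemma mlc_l2: "[:Z,-1:] \<in> mlc A Z"
  by (rule mlcI[of 0 0 1]) (simp_all add: sos_0 sos_1)

lemma mlc_l1l2: "A < Z \<Longrightarrow> [:-A,1:] * [:Z,-1:] \<in> mlc A Z"
proof -
  assume AZ: "A < Z"
  define c where "c = 1 / (Z - A)"
  have c: "c \<ge> 0" using AZ by (simp add: c_def)
  show ?thesis
  proof (rule mlcI[of 0 "[:c:] * [:Z,-1:]^2" "[:c:] * [:-A,1:]^2"])
    show "0 \<in> sos" by (rule sos_0)
    show "[:c:] * [:Z,-1:]^2 \<in> sos" by (rule sos_mult[OF sos_const_nonneg[OF c] sos_sq])
    show "[:c:] * [:-A,1:]^2 \<in> sos" by (rule sos_mult[OF sos_const_nonneg[OF c] sos_sq])
    show "[:-A,1:] * [:Z,-1:] = 0 + [:c:] * [:Z,-1:]^2 * [:-A,1:] + [:c:] * [:-A,1:]^2 * [:Z,-1:]"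
    proof (rule poly_ext)
      fix x
      have cz: "c * (Z - A) = 1" using AZ by (simp add: c_def)
      have "poly (0 + [:c:] * [:Z,-1:]^2 * [:-A,1:] + [:c:] * [:-A,1:]^2 * [:Z,-1:]) x
          = c * ((Z - x)^2 * (x - A) + (x - A)^2 * (Z - x))" by (simp add: algebra_simps power2_eq_square)
      also have "\<dots> = (c * (Z - A)) * ((x - A) * (Z - x))" by (simp add: power2_eq_square algebra_simps)
      also have "\<dots> = (x - A) * (Z - x)" using cz by simp
      also have "\<dots> = poly ([:-A,1:] * [:Z,-1:]) x" by (simp add: algebra_simps)
      finally show "poly ([:-A,1:] * [:Z,-1:]) x = poly (0 + [:c:] * [:Z,-1:]^2 * [:-A,1:] + [:c:] * [:-A,1:]^2 * [:Z,-1:]) x"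
        by simp
    qed
  qed
qed

lemma mlc_mult_l1: "A < Z \<Longrightarrow> p \<in> mlc A Z \<Longrightarrow> [:-A,1:] * p \<in> mlc A Z"
proof -
  assume AZ: "A < Z" and h: "p \<in> mlc A Z"
  obtain s0 s1 s2 where b: "s0 \<in> sos" "s1 \<in> sos" "s2 \<in> sos" "p = s0 + s1 * [:-A,1:] + s2 * [:Z,-1:]"
    using h unfolding mlc_def by blast
  have "[:-A,1:] * p = s0 * [:-A,1:] + (s1 * [:-A,1:]^2) + s2 * ([:-A,1:] * [:Z,-1:])"
    by (rule poly_ext) (simp add: b(4) algebra_simps power2_eq_square)
  also have "\<dots> \<in> mlc A Z"
    by (intro mlc_add mlc_sos_mult mlc_sos sos_mult sos_sq mlc_l1 mlc_l1l2 AZ b)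
  finally show ?thesis .
qed

lemma mlc_mult_l2: "A < Z \<Longrightarrow> p \<in> mlc A Z \<Longrightarrow> [:Z,-1:] * p \<in> mlc A Z"
proof -
  assume AZ: "A < Z" and h: "p \<in> mlc A Z"
  obtain s0 s1 s2 where b: "s0 \<in> sos" "s1 \<in> sos" "s2 \<in> sos" "p = s0 + s1 * [:-A,1:] + s2 * [:Z,-1:]"
    using h unfolding mlc_def by blast
  have "[:Z,-1:] * p = s0 * [:Z,-1:] + s1 * ([:-A,1:] * [:Z,-1:]) + (s2 * [:Z,-1:]^2)"
    by (rule poly_ext) (simp add: b(4) algebra_simps power2_eq_square)
  also have "\<dots> \<in> mlc A Z"
    by (intro mlc_add mlc_sos_mult mlc_sos sos_mult sos_sq mlc_l2 mlc_l1l2 AZ b)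
  finally show ?thesis .
qed

lemma poly_nonneg_right:
  fixes g :: "real poly"
  assumes "r < b" and "\<And>x. r < x \<Longrightarrow> x < b \<Longrightarrow> poly g x \<ge> 0"
  shows "poly g r \<ge> 0"
proof (rule tendsto_lowerbound)
  show "((\<lambda>x. poly g x) \<longlongrightarrow> poly g r) (at_right r)" by (rule tendsto_poly[OF tendsto_ident_at])
  show "\<forall>\<^sub>F x in at_right r. 0 \<le> poly g x"
    using eventually_at_right_real[OF assms(1)] by (rule eventually_mono) (use assms in auto)
  show "at_right r \<noteq> bot" by simp
qed

lemma poly_nonneg_left:
  fixes g :: "real poly"
  assumes "a < r" and "\<And>x. a < x \<Longrightarrow> x < r \<Longrightarrow> poly g x \<ge> 0"
  shows "poly g r \<ge> 0"
proof (rule tendsto_lowerbound)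
  show "((\<lambda>x. poly g x) \<longlongrightarrow> poly g r) (at_left r)" by (rule tendsto_poly[OF tendsto_ident_at])
  show "\<forall>\<^sub>F x in at_left r. 0 \<le> poly g x"
    using eventually_at_left_real[OF assms(1)] by (rule eventually_mono) (use assms in auto)
  show "at_left r \<noteq> bot" by simp
qed

lemma poly_nonpos_left:
  fixes g :: "real poly"
  assumes "a < r" and "\<And>x. a < x \<Longrightarrow> x < r \<Longrightarrow> poly g x \<le> 0"
  shows "poly g r \<le> 0"
  using poly_nonneg_left[of a r "-g"] assms by auto

lemma posstz_root:
  fixes f :: "real poly"
  assumes AZ: "A < Z" and r: "A \<le> r" "r \<le> Z" and root: "poly f r = 0" and f0: "f \<noteq> 0"
    and nn: "\<And>x. A \<le> x \<Longrightarrow> x \<le> Z \<Longrightarrow> poly f x \<ge> 0"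
    and IH: "\<And>g. degree g < degree f \<Longrightarrow> (\<And>x. A \<le> x \<Longrightarrow> x \<le> Z \<Longrightarrow> poly g x \<ge> 0) \<Longrightarrow> g \<in> mlc A Z"
  shows "f \<in> mlc A Z"
proof -
  obtain g where fg: "f = [:-r,1:] * g" using root poly_eq_0_iff_dvd by (metis dvdE)
  have g0: "g \<noteq> 0" using f0 fg by auto
  have "degree ([:-r,1:] * g) = degree [:-r,1:] + degree g" by (rule degree_mult_eq) (use g0 in auto)
  hence dg: "degree g < degree f" using fg by simp
  have pf: "\<And>x. poly f x = (x - r) * poly g x" unfolding fg by (simp add: algebra_simps)
  consider "r = A" | "r = Z" | "A < r \<and> r < Z" using r by linarith
  then show ?thesis
  proof cases
    case 1
    have gpos: "poly g x \<ge> 0" if "A < x" "x \<le> Z" for x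
    proof -
      have "0 \<le> (x - r) * poly g x" using nn[of x] pf[of x] that 1 by simp
      thus ?thesis using that 1 by (simp add: zero_le_mult_iff)
    qed
    have "poly g A \<ge> 0" by (rule poly_nonneg_right[of A Z]) (use AZ gpos in auto)
    hence "g \<in> mlc A Z" using IH[OF dg] gpos by (metis order_le_less)
    thus ?thesis using fg 1 mlc_mult_l1 AZ by simp
  next
    case 2
    define h where "h = -g"
    have fh: "f = [:Z,-1:] * h" unfolding fg h_def 2 by (rule poly_ext) simp
    have hpos: "poly h x \<ge> 0" if "A \<le> x" "x < Z" for x
    proof -
      have "0 \<le> poly f x" using nn[of x] that by simp
      also have "poly f x = (Z - x) * poly h x" unfolding fh by (simp add: algebra_simps)
      finally have "0 \<le> (Z - x) * poly h x" .
      thus ?thesis using that by (simp add: zero_le_mult_iff)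
    qed
    have "poly h Z \<ge> 0" by (rule poly_nonneg_left[of A Z]) (use AZ hpos in auto)
    moreover have "degree h < degree f" using dg by (simp add: h_def)
    ultimately have "h \<in> mlc A Z" using IH hpos by (metis order_le_less)
    thus ?thesis using fh mlc_mult_l2 AZ by simp
  next
    case 3
    have gpos: "poly g x \<ge> 0" if "r < x" "x \<le> Z" for x
    proof -
      have "0 \<le> (x - r) * poly g x" using nn[of x] pf[of x] that 3 by simp
      thus ?thesis using that by (simp add: zero_le_mult_iff)
    qed
    have gneg: "poly g x \<le> 0" if "A \<le> x" "x < r" for x
    proof -
      have "0 \<le> (x - r) * poly g x" using nn[of x] pf[of x] that 3 by simp
      thus ?thesis using that by (simp add: zero_le_mult_iff)
    qed
    have "poly g r \<ge> 0" by (rule poly_nonneg_right[of r Z]) (use 3 gpos in auto)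
    moreover have "poly g r \<le> 0" by (rule poly_nonpos_left[of A r]) (use 3 gneg in auto)
    ultimately have "poly g r = 0" by simp
    then obtain h where gh: "g = [:-r,1:] * h" using poly_eq_0_iff_dvd by (metis dvdE)
    have h0: "h \<noteq> 0" using g0 gh by auto
    have "degree ([:-r,1:] * h) = degree [:-r,1:] + degree h" by (rule degree_mult_eq) (use h0 in auto)
    hence dh: "degree h < degree f" using dg gh by simp
    have fh: "f = [:-r,1:]^2 * h" unfolding fg gh by (simp only: power2_eq_square mult.assoc)
    have hpos1: "poly h x \<ge> 0" if "A \<le> x" "x \<le> Z" "x \<noteq> r" for x
    proof -
      have "0 \<le> poly f x" using nn[of x] that by simp
      also have "poly f x = (x - r)^2 * poly h x" unfolding fh by (simp add: algebra_simps)
      finally have "0 \<le> (x - r)^2 * poly h x" .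
      moreover have "(x - r)^2 > 0" using that by simp
      ultimately show ?thesis by (simp add: zero_le_mult_iff)
    qed
    have "poly h r \<ge> 0" by (rule poly_nonneg_right[of r Z]) (use 3 hpos1 in auto)
    hence "h \<in> mlc A Z" using IH[OF dh] hpos1 by metis
    thus ?thesis using fh mlc_sos_mult sos_sq by metis
  qed
qed

theorem posstz_thm:
  fixes f :: "real poly"
  assumes AZ: "A < Z" and nn: "\<And>x. A \<le> x \<Longrightarrow> x \<le> Z \<Longrightarrow> poly f x \<ge> 0"
  shows "f \<in> mlc A Z"
  using nn
proof (induction "degree f" arbitrary: f rule: less_induct)
  case less
  show ?case
  proof (cases "\<exists>r. A \<le> r \<and> r \<le> Z \<and> poly f r = 0")
    case True
    then obtain r where r: "A \<le> r" "r \<le> Z" "poly f r = 0" by blast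
    show ?thesis
    proof (cases "f = 0")
      case True thus ?thesis using mlc_sos sos_0 by simp
    next
      case False
      show ?thesis by (rule posstz_root[OF AZ r False]) (use less in auto)
    qed
  next
    case False
    hence pos: "\<And>x. A \<le> x \<Longrightarrow> x \<le> Z \<Longrightarrow> poly f x > 0" using less.prems by (metis less_le)
    have "\<exists>x\<in>{A..Z}. \<forall>y\<in>{A..Z}. poly f x \<le> poly f y"
    proof (rule continuous_attains_inf)
      show "compact {A..Z}" by simp
      show "{A..Z} \<noteq> {}" using AZ by simp
      show "continuous_on {A..Z} (poly f)" using continuous_on_poly[OF continuous_on_id, of "{A..Z}" f] by simp
    qed
    then obtain x0 where x0: "x0 \<in> {A..Z}" "\<And>y. y \<in> {A..Z} \<Longrightarrow> poly f x0 \<le> poly f y"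
      by blast
    define m where "m = poly f x0"
    have m0: "m > 0" using pos x0 by (simp add: m_def)
    show ?thesis
    proof (cases "degree f = 0")
      case True
      then obtain c where fc: "f = [:c:]" by (metis degree_eq_zeroE)
      have "c > 0" using pos[of A] AZ fc by simp
      thus ?thesis using fc sos_const_nonneg mlc_sos by simp
    next
      case False
      define f' where "f' = f + [:-m:]"
      have deg: "degree f' = degree f" unfolding f'_def using False by (simp add: degree_add_eq_left)
      have f'0: "f' \<noteq> 0" using deg False by auto
      have "f' \<in> mlc A Z"
      proof (rule posstz_root[OF AZ _ _ _ f'0])
        show "A \<le> x0" "x0 \<le> Z" using x0 by auto
        show "poly f' x0 = 0" by (simp add: f'_def m_def)
        show "\<And>x. A \<le> x \<Longrightarrow> x \<le> Z \<Longrightarrow> poly f' x \<ge> 0" using x0 by (simp add: f'_def m_def)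
        show "\<And>g. degree g < degree f' \<Longrightarrow> (\<And>x. A \<le> x \<Longrightarrow> x \<le> Z \<Longrightarrow> poly g x \<ge> 0) \<Longrightarrow> g \<in> mlc A Z"
          using less.hyps deg by auto
      qed
      moreover have "[:m:] \<in> mlc A Z" using m0 sos_const_nonneg mlc_sos by simp
      ultimately have "f' + [:m:] \<in> mlc A Z" by (rule mlc_add)
      moreover have "f' + [:m:] = f" by (simp add: f'_def const_add[symmetric])
      ultimately show ?thesis by simp
    qed
  qed
qed


definition lc :: "real set \<Rightarrow> (real \<Rightarrow> real) \<Rightarrow> bool" where
  "lc I f \<longleftrightarrow> (\<forall>x\<in>I. 0 < f x) \<and>
     (\<forall>s\<in>I. \<forall>t\<in>I. \<forall>w. 0 \<le> w \<longrightarrow> w \<le> 1 \<longrightarrow> f s powr (1 - w) * f t powr w \<le> f ((1 - w) * s + w * t))"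

lemma lc_lin:
  assumes pos: "\<And>x. x \<in> I \<Longrightarrow> 0 < a * x + b"
  shows "lc I (\<lambda>x. a * x + b)"
  unfolding lc_def
proof (intro conjI ballI allI impI)
  fix x assume "x \<in> I" thus "0 < a * x + b" by (rule pos)
next
  fix s t w :: real assume s: "s \<in> I" and t: "t \<in> I" and w: "0 \<le> w" "w \<le> 1"
  have "(a * s + b) powr (1 - w) * (a * t + b) powr w \<le> (1 - w) * (a * s + b) + w * (a * t + b)"
    by (rule Youngs_inequality_0) (use w pos s t in auto)
  also have "\<dots> = a * ((1 - w) * s + w * t) + b" by (simp add: algebra_simps)
  finally show "(a * s + b) powr (1 - w) * (a * t + b) powr w \<le> a * ((1 - w) * s + w * t) + b" .
qed

lemma lc_mult:
  assumes f: "lc I f" and g: "lc I g"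
  shows "lc I (\<lambda>x. f x * g x)"
proof -
  have fp: "\<And>x. x \<in> I \<Longrightarrow> 0 < f x" and gp: "\<And>x. x \<in> I \<Longrightarrow> 0 < g x"
    using f g unfolding lc_def by auto
  have fi: "\<And>s t w. s \<in> I \<Longrightarrow> t \<in> I \<Longrightarrow> 0 \<le> w \<Longrightarrow> w \<le> 1 \<Longrightarrow> f s powr (1 - w) * f t powr w \<le> f ((1 - w) * s + w * t)"
    using f unfolding lc_def by auto
  have gi: "\<And>s t w. s \<in> I \<Longrightarrow> t \<in> I \<Longrightarrow> 0 \<le> w \<Longrightarrow> w \<le> 1 \<Longrightarrow> g s powr (1 - w) * g t powr w \<le> g ((1 - w) * s + w * t)"
    using g unfolding lc_def by auto
  show ?thesis unfolding lc_def
  proof (intro conjI ballI allI impI)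
    fix x assume "x \<in> I" thus "0 < f x * g x" using fp gp by simp
  next
    fix s t w :: real assume s: "s \<in> I" and t: "t \<in> I" and w: "0 \<le> w" "w \<le> 1"
    have "(f s * g s) powr (1 - w) * (f t * g t) powr w
        = (f s powr (1 - w) * f t powr w) * (g s powr (1 - w) * g t powr w)"
      by (simp add: powr_mult ac_simps)
    also have "\<dots> \<le> f ((1 - w) * s + w * t) * g ((1 - w) * s + w * t)"
    proof (rule mult_mono[OF fi[OF s t w] gi[OF s t w]])
      show "0 \<le> f ((1 - w) * s + w * t)"
        using fi[OF s t w] by (meson order_trans mult_nonneg_nonneg powr_ge_zero)
      show "0 \<le> g s powr (1 - w) * g t powr w" by simp
    qed
    finally show "(f s * g s) powr (1 - w) * (f t * g t) powr w \<le> f ((1 - w) * s + w * t) * g ((1 - w) * s + w * t)" .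
  qed
qed

lemma lc_const: "0 < c \<Longrightarrow> lc I (\<lambda>x. c)"
  unfolding lc_def by (auto simp: powr_add[symmetric])

lemma lc_pow: "lc I f \<Longrightarrow> lc I (\<lambda>x. f x ^ n)"
proof (induct n)
  case 0 thus ?case using lc_const[of 1 I] by simp
next
  case (Suc n)
  have "lc I (\<lambda>x. f x * f x ^ n)" by (rule lc_mult[OF Suc(2) Suc(1)[OF Suc(2)]])
  thus ?case by simp
qed

lemma lc_chord:
  assumes lc: "lc {a<..<b} f" and st: "a < s" "s < t" "t < b" and fs: "f s = 1" and ft: "f t = 1"
  shows lc_chord_in: "\<And>x. s \<le> x \<Longrightarrow> x \<le> t \<Longrightarrow> f x \<ge> 1"
    and lc_chord_left: "\<And>x. a < x \<Longrightarrow> x \<le> s \<Longrightarrow> f x \<le> 1"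
    and lc_chord_right: "\<And>x. t \<le> x \<Longrightarrow> x < b \<Longrightarrow> f x \<le> 1"
proof -
  have fi: "\<And>s t w. s \<in> {a<..<b} \<Longrightarrow> t \<in> {a<..<b} \<Longrightarrow> 0 \<le> w \<Longrightarrow> w \<le> 1 \<Longrightarrow> f s powr (1 - w) * f t powr w \<le> f ((1 - w) * s + w * t)"
    using lc unfolding lc_def by auto
  have fp: "\<And>x. x \<in> {a<..<b} \<Longrightarrow> 0 < f x" using lc unfolding lc_def by auto
  show "f x \<ge> 1" if x: "s \<le> x" "x \<le> t" for x
  proof -
    define w where "w = (x - s) / (t - s)"
    have w: "0 \<le> w" "w \<le> 1" using x st by (auto simp: w_def field_simps)
    have "w * (t - s) = x - s" using st by (simp add: w_def)
    hence xe: "(1 - w) * s + w * t = x" by (simp add: algebra_simps)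
    have "f s powr (1 - w) * f t powr w \<le> f x" using fi[of s t w] st w xe by simp
    thus ?thesis using fs ft by simp
  qed
  show "f x \<le> 1" if x: "a < x" "x \<le> s" for x
  proof (cases "x = s")
    case True thus ?thesis using fs by simp
  next
    case False
    hence xs: "x < s" using x by simp
    define w where "w = (s - x) / (t - x)"
    have w: "0 < w" "w < 1" using xs st by (auto simp: w_def field_simps)
    have "w * (t - x) = s - x" using xs st by (simp add: w_def)
    hence se: "(1 - w) * x + w * t = s" by (simp add: algebra_simps)
    have "f x powr (1 - w) * f t powr w \<le> f s" using fi[of x t w] st w se x by simp
    hence le: "f x powr (1 - w) \<le> 1" using fs ft by simp
    show ?thesis
    proof (rule ccontr)
      assume "\<not> f x \<le> 1"
      hence "1 < f x powr (1 - w)" using w by simp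
      thus False using le by simp
    qed
  qed
  show "f x \<le> 1" if x: "t \<le> x" "x < b" for x
  proof (cases "x = t")
    case True thus ?thesis using ft by simp
  next
    case False
    hence xt: "t < x" using x by simp
    define w where "w = (t - s) / (x - s)"
    have w: "0 < w" "w < 1" using xt st by (auto simp: w_def field_simps)
    have "w * (x - s) = t - s" using xt st by (simp add: w_def)
    hence te: "(1 - w) * s + w * x = t" by (simp add: algebra_simps)
    have "f s powr (1 - w) * f x powr w \<le> f t" using fi[of s x w] st w te x by simp
    hence le: "f x powr w \<le> 1" using fs ft by simp
    show ?thesis
    proof (rule ccontr)
      assume "\<not> f x \<le> 1"
      hence "1 < f x powr w" using w by simp
      thus False using le by simp
    qed
  qed
qed

lemma exist1:
  fixes A B C Z :: real
  assumes AB: "A < B" and BC: "B < C" and CZ: "C \<le> Z"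
  shows "\<exists>n E c. 0 < n \<and> Z < E \<and> 0 < c \<and> c * (E - B)^(2*n) * (B - A) = 1 \<and> c * (E - C)^(2*n) * (C - A) = 1"
proof -
  define \<rho> where "\<rho> = (B - A) / (C - A)"
  have \<rho>: "0 < \<rho>" "\<rho> < 1" using AB BC by (auto simp: \<rho>_def field_simps)
  have lr: "ln \<rho> < 0" using \<rho> by simp
  obtain n0 :: nat where n0: "- ln \<rho> * (Z - B) / (2 * (C - B)) < real n0" using reals_Archimedean2 by blast
  define n where "n = Suc n0"
  have n: "- ln \<rho> * (Z - B) / (2 * (C - B)) < real n" "0 < n" using n0 by (auto simp: n_def)
  define \<tau> where "\<tau> = exp (ln \<rho> / (2 * real n))"
  have \<tau>: "0 < \<tau>" "\<tau> < 1" using lr n by (auto simp: \<tau>_def divide_neg_pos)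
  have \<tau>pow: "\<tau> ^ (2 * n) = \<rho>"
  proof -
    have "\<tau> ^ (2 * n) = exp (real (2 * n) * (ln \<rho> / (2 * real n)))" unfolding \<tau>_def by (rule exp_of_nat_mult[symmetric])
    also have "real (2 * n) * (ln \<rho> / (2 * real n)) = ln \<rho>" using n by simp
    finally show ?thesis using \<rho> by simp
  qed
  have \<tau>low: "1 - \<tau> \<le> - ln \<rho> / (2 * real n)"
    using exp_ge_add_one_self[of "ln \<rho> / (2 * real n)"] unfolding \<tau>_def by linarith
  define E where "E = (C - \<tau> * B) / (1 - \<tau>)"
  have EB: "E - B = (C - B) / (1 - \<tau>)" using \<tau> by (simp add: E_def field_simps)
  have EC: "E - C = \<tau> * (E - B)" using \<tau> by (simp add: E_def field_simps)
  have ZE: "Z < E"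
  proof -
    have f1: "(Z - B) * (- ln \<rho>) < 2 * real n * (C - B)" using n(1) AB BC by (simp add: field_simps)
    have f2: "(Z - B) * (1 - \<tau>) * (2 * real n) \<le> (Z - B) * (- ln \<rho>)"
    proof -
      have "(1 - \<tau>) * (2 * real n) \<le> - ln \<rho>" using \<tau>low n by (simp add: field_simps)
      thus ?thesis using AB BC CZ by (metis mult.assoc mult_left_mono diff_ge_0_iff_ge less_imp_le order_trans)
    qed
    have "(2 * real n) * ((Z - B) * (1 - \<tau>)) < (2 * real n) * (C - B)"
      using order_le_less_trans[OF f2 f1] by (simp add: mult.commute)
    hence "(Z - B) * (1 - \<tau>) < C - B" using n(2) by (simp add: mult_less_cancel_left_pos)
    hence "Z - B < (C - B) / (1 - \<tau>)" using \<tau> by (simp add: field_simps)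
    thus ?thesis using EB by simp
  qed
  define c where "c = 1 / ((E - B)^(2*n) * (B - A))"
  have EBp: "E - B > 0" using ZE CZ BC by simp
  have c: "0 < c" using EBp AB by (simp add: c_def)
  have hB: "c * (E - B)^(2*n) * (B - A) = 1" using EBp AB by (simp add: c_def)
  have hC: "c * (E - C)^(2*n) * (C - A) = 1"
  proof -
    have "c * (E - C)^(2*n) * (C - A) = c * (E - B)^(2*n) * (\<rho> * (C - A))"
      by (simp add: EC power_mult_distrib \<tau>pow)
    also have "\<rho> * (C - A) = B - A" using AB BC by (simp add: \<rho>_def)
    finally show ?thesis using hB by simp
  qed
  show ?thesis using n ZE c hB hC by blast
qed

lemma case1_pointwise:
  fixes A B C Z E c :: real
  assumes AB: "A < B" and BC: "B < C" and CZ: "C \<le> Z" and ZE: "Z < E" and c: "0 < c"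
    and hB: "c * (E - B)^(2*n) * (B - A) = 1" and hC: "c * (E - C)^(2*n) * (C - A) = 1"
  shows case1_out: "\<And>x. A \<le> x \<Longrightarrow> x \<le> Z \<Longrightarrow> (x \<le> B \<or> C \<le> x) \<Longrightarrow> c * (E - x)^(2*n) * (x - A) \<le> 1"
    and case1_in: "\<And>x. B \<le> x \<Longrightarrow> x \<le> C \<Longrightarrow> c * (E - x)^(2*n) * (x - A) \<ge> 1"
proof -
  define \<psi> where "\<psi> x = c * (E - x)^(2*n) * (x - A)" for x
  have lc: "lc {A<..<E} \<psi>"
  proof -
    have "lc {A<..<E} (\<lambda>x. (\<lambda>x. c) x * (\<lambda>x. ((-1) * x + E) ^ (2*n)) x * (\<lambda>x. 1 * x + (- A)) x)"
      by (intro lc_mult lc_const lc_pow lc_lin c) auto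
    thus ?thesis unfolding \<psi>_def by simp
  qed
  have s: "A < B" "B < C" "C < E" using AB BC CZ ZE by auto
  have f1: "\<psi> B = 1" "\<psi> C = 1" using hB hC by (simp_all add: \<psi>_def)
  show "c * (E - x)^(2*n) * (x - A) \<ge> 1" if "B \<le> x" "x \<le> C" for x
    using lc_chord_in[OF lc s f1 that] by (simp add: \<psi>_def)
  show "c * (E - x)^(2*n) * (x - A) \<le> 1" if x: "A \<le> x" "x \<le> Z" "x \<le> B \<or> C \<le> x" for x
  proof (cases "x = A")
    case True thus ?thesis by simp
  next
    case False
    hence "A < x" using x by simp
    thus ?thesis using x lc_chord_left[OF lc s f1] lc_chord_right[OF lc s f1] ZE
      by (auto simp: \<psi>_def)
  qed
qed


lemma pow_le_exp: "0 \<le> p \<Longrightarrow> p ^ k \<le> exp (real k * (p - 1))"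
proof -
  assume p: "0 \<le> p"
  have "p \<le> exp (p - 1)" using exp_ge_add_one_self[of "p - 1"] by simp
  hence "p ^ k \<le> exp (p - 1) ^ k" using p by (rule power_mono)
  also have "\<dots> = exp (real k * (p - 1))" by (rule exp_of_nat_mult[symmetric])
  finally show ?thesis .
qed

lemma mode_bound:
  fixes A B1 E x :: real
  assumes AB: "A < B1" and x: "A \<le> x" "x \<le> B1" and BE: "B1 < E"
    and mn: "real n * (B1 - A) \<le> real m * (E - B1)"
  shows "(x - A)^m * (E - x)^n \<le> (B1 - A)^m * (E - B1)^n"
proof -
  define p where "p = (x - A) / (B1 - A)"
  define q where "q = (E - x) / (E - B1)"
  have p: "0 \<le> p" using AB x by (simp add: p_def)
  have q: "0 \<le> q" using BE x by (simp add: q_def)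
  have "p ^ m * q ^ n \<le> exp (real m * (p - 1)) * exp (real n * (q - 1))"
    by (rule mult_mono[OF pow_le_exp[OF p] pow_le_exp[OF q]]) (simp_all add: q)
  also have "\<dots> = exp (real m * (p - 1) + real n * (q - 1))" by (simp add: exp_add)
  also have "\<dots> \<le> 1"
  proof -
    have e: "real m * (p - 1) + real n * (q - 1) = (B1 - x) * (real n * (B1 - A) - real m * (E - B1)) / ((E - B1) * (B1 - A))"
      using AB BE by (simp add: p_def q_def field_simps)
    have "(B1 - x) * (real n * (B1 - A) - real m * (E - B1)) \<le> 0"
      using x mn by (simp add: mult_nonneg_nonpos)
    moreover have "(E - B1) * (B1 - A) > 0" using AB BE by simp
    ultimately have "real m * (p - 1) + real n * (q - 1) \<le> 0" unfolding e by (simp add: divide_nonpos_pos)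
    thus ?thesis by simp
  qed
  finally have le: "p ^ m * q ^ n \<le> 1" .
  have "(x - A)^m * (E - x)^n = (p ^ m * q ^ n) * ((B1 - A)^m * (E - B1)^n)"
    using AB BE by (simp add: p_def q_def power_divide field_simps)
  also have "\<dots> \<le> 1 * ((B1 - A)^m * (E - B1)^n)"
    by (rule mult_right_mono[OF le]) (use AB BE in simp)
  finally show ?thesis by simp
qed

lemma ln_strict:
  fixes y :: real
  assumes "0 < y" "y \<noteq> 1"
  shows "ln y < y - 1"
proof -
  have "ln y \<le> y - 1" using assms(1) by (rule ln_le_minus_one)
  moreover have "ln y \<noteq> y - 1" using ln_eq_minus_one[of y] assms by auto
  ultimately show ?thesis by simp
qed

lemma exist3:
  fixes A B1 C1 B2 C2 Z :: real
  assumes o1: "A \<le> B1" and o2: "B1 < C1" and o3: "C1 < B2" and o4: "B2 < C2" and o5: "C2 \<le> Z"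
  shows "\<exists>m n E c. Z < E \<and> 0 < c
     \<and> c * (B2 - A)^(2*m) * (E - B2)^(2*n) * ((B2 - B1) * (B2 - C1)) = 1
     \<and> c * (C2 - A)^(2*m) * (E - C2)^(2*n) * ((C2 - B1) * (C2 - C1)) = 1
     \<and> (\<forall>x. A \<le> x \<and> x \<le> B1 \<longrightarrow> c * (x - A)^(2*m) * (E - x)^(2*n) * ((x - B1) * (x - C1)) \<le> 1)"
proof -
  define b1 where "b1 = B1 - A"
  define b2 where "b2 = B2 - A"
  define c2 where "c2 = C2 - A"
  define Q2 where "Q2 = (B2 - B1) * (B2 - C1)"
  define Q3 where "Q3 = (C2 - B1) * (C2 - C1)"
  define qA where "qA = (A - B1) * (A - C1)"
  have Q2: "0 < Q2" using o1 o2 o3 o4 by (simp add: Q2_def)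
  have Q23: "Q2 < Q3" unfolding Q2_def Q3_def
    by (rule mult_strict_mono) (use o1 o2 o3 o4 in auto)
  have b: "0 < b2" "b2 < c2" "0 \<le> b1" "b1 < b2" using o1 o2 o3 o4 by (auto simp: b1_def b2_def c2_def)
  define \<theta> where "\<theta> = (B2 - B1) / (C2 - B2)"
  have \<theta>: "0 < \<theta>" using o1 o2 o3 o4 by (simp add: \<theta>_def)
  define lr where "lr = ln (c2 / b2)"
  define lq where "lq = ln (Q3 / Q2)"
  have lr: "0 < lr" using b by (simp add: lr_def)
  have lq: "0 < lq" using Q2 Q23 by (simp add: lq_def)
  obtain m :: nat where hm: "A < B1 \<Longrightarrow> b1 * lq \<le> 2 * real m * ((C2 - B2) - b1 * lr)
      \<and> \<theta> * lq + ln (qA / Q2) \<le> 2 * real m * (- (ln (b1 / b2) + \<theta> * lr))"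
  proof (cases "A < B1")
    case False thus ?thesis using that by blast
  next
    case True
    have b1p: "0 < b1" using True by (simp add: b1_def)
    have \<Delta>: "0 < (C2 - B2) - b1 * lr"
    proof -
      have "lr \<le> c2 / b2 - 1" unfolding lr_def using b by (intro ln_le_minus_one) simp
      hence "b1 * lr \<le> b1 * (c2 / b2 - 1)" using b1p by (simp add: mult_left_mono)
      also have "\<dots> = b1 * (C2 - B2) / b2" using b by (simp add: c2_def b2_def field_simps)
      also have "\<dots> < C2 - B2"
      proof -
        have "b1 * (C2 - B2) < (C2 - B2) * b2" using b o4 by (simp add: mult.commute mult_strict_left_mono)
        thus ?thesis using b(1) by (simp add: pos_divide_less_eq)
      qed
      finally show ?thesis by simp
    qed
    have \<gamma>: "0 < - (ln (b1 / b2) + \<theta> * lr)"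
    proof -
      have "ln (b1 / b2) < b1 / b2 - 1" using b b1p by (intro ln_strict) (auto simp: field_simps)
      moreover have "\<theta> * lr \<le> \<theta> * (c2 / b2 - 1)"
        unfolding lr_def using b \<theta> by (intro mult_left_mono ln_le_minus_one) auto
      moreover have "b1 / b2 - 1 + \<theta> * (c2 / b2 - 1) = 0"
      proof -
        have e1: "b1 / b2 - 1 = - (B2 - B1) / b2" using b by (simp add: b1_def b2_def field_simps)
        have e2: "\<theta> * (c2 / b2 - 1) = (B2 - B1) / b2"
        proof -
          have "c2 / b2 - 1 = (C2 - B2) / b2" using b by (simp add: c2_def b2_def field_simps)
          thus ?thesis using o4 by (simp add: \<theta>_def)
        qed
        show ?thesis unfolding e1 e2 by (simp add: diff_divide_distrib[symmetric] add_divide_distrib[symmetric])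
      qed
      ultimately show ?thesis by linarith
    qed
    define M where "M = max (b1 * lq / (2 * ((C2 - B2) - b1 * lr)))
        ((\<theta> * lq + ln (qA / Q2)) / (2 * (- (ln (b1 / b2) + \<theta> * lr))))"
    obtain m :: nat where mM: "M < real m" using reals_Archimedean2 by blast
    have "b1 * lq \<le> 2 * real m * ((C2 - B2) - b1 * lr)"
    proof -
      have "b1 * lq / (2 * ((C2 - B2) - b1 * lr)) \<le> real m" using mM unfolding M_def by linarith
      thus ?thesis using \<Delta> by (simp add: field_simps)
    qed
    moreover have "\<theta> * lq + ln (qA / Q2) \<le> 2 * real m * (- (ln (b1 / b2) + \<theta> * lr))"
    proof -
      have "(\<theta> * lq + ln (qA / Q2)) / (2 * (- (ln (b1 / b2) + \<theta> * lr))) \<le> real m" using mM unfolding M_def by linarith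
      thus ?thesis using \<gamma> by (simp add: field_simps)
    qed
    ultimately show ?thesis using that by blast
  qed
  define L where "L = 2 * real m * lr + lq"
  have L: "0 < L" using lr lq by (simp add: L_def add_nonneg_pos)
  obtain n0 :: nat where n0: "L * (Z - B2) / (2 * (C2 - B2)) < real n0" using reals_Archimedean2 by blast
  define n where "n = Suc n0"
  have n: "L * (Z - B2) / (2 * (C2 - B2)) < real n" "0 < n" using n0 by (auto simp: n_def)
  define \<tau> where "\<tau> = exp (- L / (2 * real n))"
  have \<tau>: "0 < \<tau>" "\<tau> < 1" using L n by (auto simp: \<tau>_def)
  have \<tau>pow: "\<tau> ^ (2 * n) = exp (- L)"
  proof -
    have "\<tau> ^ (2 * n) = exp (real (2 * n) * (- L / (2 * real n)))" unfolding \<tau>_def by (rule exp_of_nat_mult[symmetric])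
    also have "real (2 * n) * (- L / (2 * real n)) = - L" using n by simp
    finally show ?thesis .
  qed
  have expL: "exp L = (c2 / b2) ^ (2 * m) * (Q3 / Q2)"
  proof -
    have "exp L = exp (real (2 * m) * lr) * exp lq" by (simp add: L_def exp_add)
    also have "exp (real (2 * m) * lr) = exp lr ^ (2 * m)" by (rule exp_of_nat_mult)
    also have "exp lr = c2 / b2" using b by (simp add: lr_def)
    also have "exp lq = Q3 / Q2" using Q2 Q23 by (simp add: lq_def)
    finally show ?thesis .
  qed
  have key: "\<tau> ^ (2 * n) * c2 ^ (2 * m) * Q3 = b2 ^ (2 * m) * Q2"
  proof -
    have "\<tau> ^ (2 * n) * exp L = 1" unfolding \<tau>pow by (simp add: exp_minus)
    hence h: "\<tau> ^ (2 * n) * ((c2 / b2) ^ (2 * m) * (Q3 / Q2)) = 1" by (simp only: expL)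
    have "\<tau> ^ (2 * n) * c2 ^ (2 * m) * Q3 = \<tau> ^ (2 * n) * ((c2 / b2) ^ (2 * m) * b2 ^ (2 * m)) * ((Q3 / Q2) * Q2)"
      using b Q2 by (simp add: power_divide)
    also have "\<dots> = (\<tau> ^ (2 * n) * ((c2 / b2) ^ (2 * m) * (Q3 / Q2))) * (b2 ^ (2 * m) * Q2)" by (simp only: mult_ac)
    also have "\<dots> = b2 ^ (2 * m) * Q2" using h by simp
    finally show ?thesis .
  qed
  have \<tau>low: "(1 - \<tau>) * (2 * real n) \<le> L"
  proof -
    have "1 - \<tau> \<le> L / (2 * real n)"
      using exp_ge_add_one_self[of "- L / (2 * real n)"] unfolding \<tau>_def by simp
    thus ?thesis using n by (simp add: field_simps)
  qed
  define E where "E = (C2 - \<tau> * B2) / (1 - \<tau>)"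
  have EB: "E - B2 = (C2 - B2) / (1 - \<tau>)" using \<tau> by (simp add: E_def field_simps)
  have EC: "E - C2 = \<tau> * (E - B2)" using \<tau> by (simp add: E_def field_simps)
  have EBp: "0 < E - B2" using EB \<tau> o4 by simp
  have EBL: "2 * real n * (C2 - B2) \<le> (E - B2) * L"
  proof -
    have "(C2 - B2) * ((1 - \<tau>) * (2 * real n)) \<le> (C2 - B2) * L" using \<tau>low o4 by (simp add: mult_left_mono)
    hence h: "2 * real n * (C2 - B2) * (1 - \<tau>) \<le> (C2 - B2) * L" by (simp add: algebra_simps)
    have "2 * real n * (C2 - B2) = (2 * real n * (C2 - B2) * (1 - \<tau>)) / (1 - \<tau>)" using \<tau> by simp
    also have "\<dots> \<le> ((C2 - B2) * L) / (1 - \<tau>)" by (rule divide_right_mono) (use h \<tau> in auto)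
    also have "\<dots> = (E - B2) * L" using EB by simp
    finally show ?thesis .
  qed
  have ZE: "Z < E"
  proof -
    have "L * (Z - B2) < 2 * real n * (C2 - B2)" using n(1) o4 by (simp add: field_simps)
    also have "\<dots> \<le> (E - B2) * L" by (rule EBL)
    finally have "L * (Z - B2) < L * (E - B2)" by (simp add: mult.commute)
    hence "Z - B2 < E - B2" using L by (simp add: mult_less_cancel_left_pos)
    thus ?thesis by simp
  qed
  define c where "c = 1 / (b2 ^ (2 * m) * (E - B2) ^ (2 * n) * Q2)"
  have c: "0 < c" using b EBp Q2 by (simp add: c_def)
  have hB: "c * (B2 - A)^(2*m) * (E - B2)^(2*n) * ((B2 - B1) * (B2 - C1)) = 1"
    using b EBp Q2 by (simp add: c_def b2_def[symmetric] Q2_def[symmetric])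
  have hC: "c * (C2 - A)^(2*m) * (E - C2)^(2*n) * ((C2 - B1) * (C2 - C1)) = 1"
  proof -
    have "c * (C2 - A)^(2*m) * (E - C2)^(2*n) * ((C2 - B1) * (C2 - C1))
        = c * (E - B2)^(2*n) * (\<tau> ^ (2 * n) * c2 ^ (2 * m) * Q3)"
      by (simp add: EC power_mult_distrib c2_def Q3_def)
    also have "\<dots> = c * (E - B2)^(2*n) * (b2 ^ (2 * m) * Q2)" by (simp add: key)
    also have "\<dots> = 1" using b EBp Q2 by (simp add: c_def)
    finally show ?thesis .
  qed
  have left: "c * (x - A)^(2*m) * (E - x)^(2*n) * ((x - B1) * (x - C1)) \<le> 1" if x: "A \<le> x" "x \<le> B1" for x
  proof (cases "A < B1")
    case False
    hence "x = B1" using x o1 by simp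
    thus ?thesis by simp
  next
    case True
    note hm' = hm[OF True]
    have b1p: "0 < b1" using True by (simp add: b1_def)
    have qAp: "0 < qA" using True o2 by (simp add: qA_def mult_neg_neg)
    have BE: "B1 < E" using ZE o2 o3 o4 o5 by simp
    have mode: "real (2*n) * (B1 - A) \<le> real (2*m) * (E - B1)"
    proof -
      have "real m * (2 * real n * (C2 - B2)) \<le> real m * ((E - B2) * L)"
        using EBL by (simp add: mult_left_mono)
      moreover have "real n * (b1 * L) \<le> real n * (2 * real m * (C2 - B2))"
      proof -
        have "b1 * L \<le> 2 * real m * (C2 - B2)" using hm' by (simp add: L_def algebra_simps)
        thus ?thesis by (simp add: mult_left_mono)
      qed
      ultimately have "(real n * b1) * L \<le> (real m * (E - B2)) * L" by (simp add: algebra_simps)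
      hence "real n * b1 \<le> real m * (E - B2)" using L by simp
      moreover have "real m * (E - B2) \<le> real m * (E - B1)" using o2 o3 by (simp add: mult_left_mono)
      ultimately show ?thesis by (simp add: b1_def)
    qed
    have mb: "(x - A)^(2*m) * (E - x)^(2*n) \<le> (B1 - A)^(2*m) * (E - B1)^(2*n)"
      by (rule mode_bound[OF True x BE mode])
    have q0: "0 \<le> (x - B1) * (x - C1)" using x o2 by (simp add: mult_nonpos_nonpos)
    have qle: "(x - B1) * (x - C1) \<le> qA"
    proof -
      have "qA - (x - B1) * (x - C1) = (x - A) * (B1 + C1 - x - A)" by (simp add: qA_def algebra_simps)
      also have "\<dots> \<ge> 0" using x o2 by simp
      finally show ?thesis by simp
    qed
    have "c * (x - A)^(2*m) * (E - x)^(2*n) * ((x - B1) * (x - C1))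
        \<le> c * ((B1 - A)^(2*m) * (E - B1)^(2*n)) * qA"
    proof -
      have "c * ((x - A)^(2*m) * (E - x)^(2*n)) * ((x - B1) * (x - C1)) \<le> c * ((B1 - A)^(2*m) * (E - B1)^(2*n)) * qA"
        by (intro mult_mono mb qle mult_left_mono) (use c q0 BE in auto)
      thus ?thesis by (simp add: mult.assoc)
    qed
    also have "\<dots> = (b1 / b2)^(2*m) * ((E - B1) / (E - B2))^(2*n) * (qA / Q2)"
      using b EBp Q2 by (simp add: c_def b1_def power_divide field_simps)
    also have "\<dots> \<le> exp (2 * real m * ln (b1 / b2)) * exp (\<theta> * L) * (qA / Q2)"
    proof (intro mult_mono)
      have "exp (real (2*m) * ln (b1 / b2)) = exp (ln (b1 / b2)) ^ (2*m)" by (rule exp_of_nat_mult)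
      also have "exp (ln (b1 / b2)) = b1 / b2" using b1p b by simp
      finally have "(b1 / b2)^(2*m) = exp (real (2*m) * ln (b1 / b2))" by simp
      thus "(b1 / b2)^(2*m) \<le> exp (2 * real m * ln (b1 / b2))" by simp
      have "(E - B1) / (E - B2) = 1 + (B2 - B1) / (E - B2)" using EBp by (simp add: field_simps)
      moreover have "0 \<le> (E - B1) / (E - B2)" using EBp BE by simp
      ultimately have "((E - B1) / (E - B2))^(2*n) \<le> exp (real (2*n) * ((E - B1) / (E - B2) - 1))"
        using pow_le_exp by blast
      also have "(E - B1) / (E - B2) - 1 = (B2 - B1) / (E - B2)" using EBp by (simp add: field_simps)
      finally have "((E - B1) / (E - B2))^(2*n) \<le> exp (real (2*n) * ((B2 - B1) / (E - B2)))" .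
      also have "\<dots> \<le> exp (\<theta> * L)"
      proof -
        have "real (2*n) * (B2 - B1) * (C2 - B2) \<le> (B2 - B1) * ((E - B2) * L)"
          using mult_left_mono[OF EBL, of "B2 - B1"] o2 o3 by (simp add: algebra_simps)
        hence "real (2*n) * ((B2 - B1) / (E - B2)) \<le> \<theta> * L"
          using EBp o4 by (simp add: \<theta>_def field_simps)
        thus ?thesis by simp
      qed
      finally show "((E - B1) / (E - B2))^(2*n) \<le> exp (\<theta> * L)" .
    qed (use qAp Q2 in auto)
    also have "\<dots> = exp (2 * real m * ln (b1 / b2) + \<theta> * L + ln (qA / Q2))"
      using qAp Q2 by (simp add: exp_add)
    also have "\<dots> \<le> 1"
    proof -
      have "2 * real m * ln (b1 / b2) + \<theta> * L + ln (qA / Q2)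
          = \<theta> * lq + ln (qA / Q2) - 2 * real m * (- (ln (b1 / b2) + \<theta> * lr))"
        by (simp add: L_def algebra_simps)
      also have "\<dots> \<le> 0" using hm' by simp
      finally show ?thesis by simp
    qed
    finally show ?thesis .
  qed
  show ?thesis using ZE c hB hC left by blast
qed


lemma case3_pointwise:
  fixes A B1 C1 B2 C2 Z E c :: real
  assumes o1: "A \<le> B1" and o2: "B1 < C1" and o3: "C1 < B2" and o4: "B2 < C2" and o5: "C2 \<le> Z"
    and ZE: "Z < E" and c: "0 < c"
    and hB: "c * (B2 - A)^(2*m) * (E - B2)^(2*n) * ((B2 - B1) * (B2 - C1)) = 1"
    and hC: "c * (C2 - A)^(2*m) * (E - C2)^(2*n) * ((C2 - B1) * (C2 - C1)) = 1"
    and left: "\<forall>x. A \<le> x \<and> x \<le> B1 \<longrightarrow> c * (x - A)^(2*m) * (E - x)^(2*n) * ((x - B1) * (x - C1)) \<le> 1"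
  shows case3_out: "\<And>x. A \<le> x \<Longrightarrow> x \<le> Z \<Longrightarrow> (x \<le> B2 \<or> C2 \<le> x) \<Longrightarrow> c * (x - A)^(2*m) * (E - x)^(2*n) * ((x - B1) * (x - C1)) \<le> 1"
    and case3_in: "\<And>x. B2 \<le> x \<Longrightarrow> x \<le> C2 \<Longrightarrow> c * (x - A)^(2*m) * (E - x)^(2*n) * ((x - B1) * (x - C1)) \<ge> 1"
proof -
  define \<psi> where "\<psi> x = c * (x - A)^(2*m) * (E - x)^(2*n) * ((x - B1) * (x - C1))" for x
  have lc: "lc {C1<..<E} \<psi>"
  proof -
    have "lc {C1<..<E} (\<lambda>x. (\<lambda>x. c) x * (\<lambda>x. (1 * x + (- A)) ^ (2*m)) x * (\<lambda>x. ((-1) * x + E) ^ (2*n)) x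
         * ((\<lambda>x. 1 * x + (- B1)) x * (\<lambda>x. 1 * x + (- C1)) x))"
      by (intro lc_mult lc_const lc_pow lc_lin c) (use o1 o2 in auto)
    thus ?thesis unfolding \<psi>_def by simp
  qed
  have s: "C1 < B2" "B2 < C2" "C2 < E" using o3 o4 o5 ZE by auto
  have f1: "\<psi> B2 = 1" "\<psi> C2 = 1" using hB hC by (simp_all add: \<psi>_def)
  show "c * (x - A)^(2*m) * (E - x)^(2*n) * ((x - B1) * (x - C1)) \<ge> 1" if "B2 \<le> x" "x \<le> C2" for x
    using lc_chord_in[OF lc s f1 that] by (simp add: \<psi>_def)
  show "c * (x - A)^(2*m) * (E - x)^(2*n) * ((x - B1) * (x - C1)) \<le> 1"
    if x: "A \<le> x" "x \<le> Z" "x \<le> B2 \<or> C2 \<le> x" for x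
  proof -
    consider "x \<le> B1" | "B1 < x \<and> x \<le> C1" | "C1 < x \<and> x \<le> B2" | "C2 \<le> x" using x by linarith
    thus ?thesis
    proof cases
      case 1 thus ?thesis using left x by blast
    next
      case 2
      have "c * (x - A)^(2*m) * (E - x)^(2*n) \<ge> 0" using c x ZE by simp
      moreover have "(x - B1) * (x - C1) \<le> 0" using 2 by (simp add: mult_nonneg_nonpos)
      ultimately have "c * (x - A)^(2*m) * (E - x)^(2*n) * ((x - B1) * (x - C1)) \<le> 0"
        by (simp add: mult_nonneg_nonpos)
      thus ?thesis by simp
    next
      case 3 thus ?thesis using lc_chord_left[OF lc s f1, of x] by (simp add: \<psi>_def)
    next
      case 4 thus ?thesis using lc_chord_right[OF lc s f1, of x] x ZE by (simp add: \<psi>_def)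
    qed
  qed
qed

lemma lemmaG:
  fixes f1 f2 u v :: "'a::comm_ring_1"
  assumes e: "u * f1 + v * f2 = 1" and u: "u * f2 \<in> qmodule S" and v: "v * f1 \<in> qmodule S"
  shows "f1 * f2 \<in> qmodule S"
proof -
  have "f1^2 * (u * f2) + f2^2 * (v * f1) = f1 * f2 * (u * f1 + v * f2)"
    by (simp add: power2_eq_square algebra_simps)
  hence "f1 * f2 = f1^2 * (u * f2) + f2^2 * (v * f1)" using e by simp
  also have "\<dots> \<in> qmodule S" by (intro qmodule_add qmodule_sos_mult sos_sq u v)
  finally show ?thesis .
qed

lemma mlc_qmodule:
  assumes v: "v \<in> mlc A Z" and h: "h \<in> qmodule S" and h1: "[:-A,1:] * h \<in> qmodule S"
    and h2: "[:Z,-1:] * h \<in> qmodule S"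
  shows "v * h \<in> qmodule S"
proof -
  obtain s0 s1 s2 where b: "s0 \<in> sos" "s1 \<in> sos" "s2 \<in> sos" "v = s0 + s1 * [:-A,1:] + s2 * [:Z,-1:]"
    using v unfolding mlc_def by blast
  have "v * h = s0 * h + s1 * ([:-A,1:] * h) + s2 * ([:Z,-1:] * h)"
    by (simp add: b(4) algebra_simps)
  also have "\<dots> \<in> qmodule S" by (intro qmodule_add qmodule_sos_mult b h h1 h2)
  finally show ?thesis .
qed

lemma div2:
  fixes P :: "real poly"
  assumes PB: "poly P B = 0" and PC: "poly P C = 0" and BC: "B \<noteq> C"
  shows "\<exists>v. P = [:-C,1:] * [:-B,1:] * v"
proof -
  obtain g where g: "P = [:-B,1:] * g" using PB poly_eq_0_iff_dvd by (metis dvdE)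
  have "(C - B) * poly g C = 0" using PC unfolding g by (simp add: algebra_simps)
  hence "poly g C = 0" using BC by auto
  then obtain h where h: "g = [:-C,1:] * h" using poly_eq_0_iff_dvd by (metis dvdE)
  show ?thesis by (rule exI[of _ h]) (unfold g h, simp only: mult.assoc mult.left_commute)
qed

lemma nonneg_except2:
  fixes v :: "real poly"
  assumes AZ: "A < Z" and nn: "\<And>x. A \<le> x \<Longrightarrow> x \<le> Z \<Longrightarrow> x \<noteq> p1 \<Longrightarrow> x \<noteq> p2 \<Longrightarrow> poly v x \<ge> 0"
    and x: "A \<le> x" "x \<le> Z"
  shows "poly v x \<ge> 0"
proof (cases "x < Z")
  case True
  define b0 where "b0 = (if x < p1 then min Z p1 else Z)"
  define b where "b = (if x < p2 then min b0 p2 else b0)"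
  have xb: "x < b" using True by (auto simp: b_def b0_def)
  show ?thesis
  proof (rule poly_nonneg_right[OF xb])
    fix y assume y: "x < y" "y < b"
    have "y \<noteq> p1" using y by (auto simp: b_def b0_def split: if_splits)
    moreover have "y \<noteq> p2" using y by (auto simp: b_def b0_def split: if_splits)
    moreover have "y \<le> Z" using y by (auto simp: b_def b0_def split: if_splits)
    ultimately show "poly v y \<ge> 0" using nn y x by auto
  qed
next
  case False
  hence xZ: "x = Z" using x by simp
  define a0 where "a0 = (if p1 < x then max A p1 else A)"
  define a where "a = (if p2 < x then max a0 p2 else a0)"
  have ax: "a < x" using xZ AZ by (auto simp: a_def a0_def)
  show ?thesis
  proof (rule poly_nonneg_left[OF ax])
    fix y assume y: "a < y" "y < x"
    have "y \<noteq> p1" using y by (auto simp: a_def a0_def split: if_splits)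
    moreover have "y \<noteq> p2" using y by (auto simp: a_def a0_def split: if_splits)
    moreover have "A \<le> y" using y by (auto simp: a_def a0_def split: if_splits)
    ultimately show "poly v y \<ge> 0" using nn y x by auto
  qed
qed

lemma sos_poly_sq: "(c::real) \<ge> 0 \<Longrightarrow> [:c:] * p ^ 2 \<in> sos"
  by (rule sos_mult[OF sos_const_nonneg sos_sq])

locale gens =
  fixes S :: "real poly set" and A Z :: real
  assumes fin: "finite S" and l1S: "[:-A,1:] \<in> S" and l2S: "[:Z,-1:] \<in> S" and AZ: "A \<le> Z"
begin

abbreviation "Q \<equiv> qmodule S"

lemma l1Q: "[:-A,1:] \<in> Q" by (rule qmodule_gen[OF fin l1S])
lemma l2Q: "[:Z,-1:] \<in> Q" by (rule qmodule_gen[OF fin l2S])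

lemma mlc_Q: "v \<in> mlc A Z \<Longrightarrow> v \<in> Q"
proof -
  assume v: "v \<in> mlc A Z"
  have "v * 1 \<in> Q" by (rule mlc_qmodule[OF v qmodule_sos[OF sos_1]]) (use l1Q l2Q in simp_all)
  thus ?thesis by simp
qed

lemma pair_l1l2: "[:-A,1:] * [:Z,-1:] \<in> Q"
proof (cases "A < Z")
  case True thus ?thesis using mlc_l1l2 mlc_Q by blast
next
  case False
  hence AZe: "Z = A" using AZ by simp
  define s1 where "s1 = ([:1/2:] * (1 - [:-A,1:]))^2"
  define s2 where "s2 = ([:1/2:] * (1 + [:-A,1:]))^2"
  have "[:-A,1:] * [:Z,-1:] = s1 * [:-A,1:] + s2 * [:Z,-1:]"
    by (rule poly_ext) (simp add: s1_def s2_def AZe power2_eq_square algebra_simps)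
  also have "\<dots> \<in> Q" by (intro qmodule_add qmodule_sos_mult l1Q l2Q) (simp_all add: s1_def s2_def sos_sq)
  finally show ?thesis .
qed

lemma pair_l1q:
  assumes AB: "A \<le> B" and BC: "B < C" and CZ: "C \<le> Z" and qS: "[:-C,1:] * [:-B,1:] \<in> S"
  shows "[:-A,1:] * ([:-C,1:] * [:-B,1:]) \<in> Q"
proof (cases "A = B")
  case True
  have "[:-A,1:] * ([:-C,1:] * [:-B,1:]) = [:-C,1:]^2 * [:-A,1:] + [:C - A:] * ([:-C,1:] * [:-B,1:])"
    by (rule poly_ext) (simp add: True power2_eq_square algebra_simps)
  also have "\<dots> \<in> Q"
    by (intro qmodule_add qmodule_sos_mult l1Q sos_sq sos_const_nonneg qmodule_gen[OF fin qS]) (use BC True in simp)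
  finally show ?thesis .
next
  case False
  hence AB': "A < B" using AB by simp
  have AZ': "A < Z" using AB' BC CZ by simp
  obtain n E c where nEc: "0 < n" "Z < E" "0 < c" "c * (E - B)^(2*n) * (B - A) = 1" "c * (E - C)^(2*n) * (C - A) = 1"
    using exist1[OF AB' BC CZ] by blast
  define u where "u = [:c:] * [:E,-1:]^(2*n)"
  have usos: "u \<in> sos"
  proof -
    have "u = [:c:] * ([:E,-1:]^n)^2" by (simp add: u_def power_mult[symmetric] mult.commute)
    thus ?thesis using sos_poly_sq nEc by simp
  qed
  define P where "P = 1 - u * [:-A,1:]"
  have pP': "\<And>y. poly P y = 1 - c * (E - y)^(2*n) * (y - A)"
    by (simp add: P_def u_def algebra_simps)
  have "poly P B = 0" "poly P C = 0" using nEc by (simp_all add: pP')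
  then obtain v where v: "P = [:-C,1:] * [:-B,1:] * v" using div2 BC by (metis less_irrefl)
  have e: "u * [:-A,1:] + v * ([:-C,1:] * [:-B,1:]) = 1" using v by (simp add: P_def algebra_simps)
  have vnn: "poly v x \<ge> 0" if x: "A \<le> x" "x \<le> Z" for x
  proof (rule nonneg_except2[OF AZ' _ x, of B C])
    fix y assume y: "A \<le> y" "y \<le> Z" "y \<noteq> B" "y \<noteq> C"
    have pP: "poly P y = (y - C) * (y - B) * poly v y" unfolding v by (simp add: algebra_simps)
    consider "y < B" | "B < y \<and> y < C" | "C < y" using y by linarith
    thus "poly v y \<ge> 0"
    proof cases
      case 1
      have "c * (E - y)^(2*n) * (y - A) \<le> 1" using case1_out[OF AB' BC CZ nEc(2,3,4,5), of y] y 1 by simp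
      hence "0 \<le> (y - C) * (y - B) * poly v y" using pP pP' by simp
      moreover have "(y - C) * (y - B) > 0" using 1 BC by (simp add: mult_neg_neg)
      ultimately show ?thesis by (simp add: zero_le_mult_iff)
    next
      case 2
      have "c * (E - y)^(2*n) * (y - A) \<ge> 1" using case1_in[OF AB' BC CZ nEc(2,3,4,5), of y] 2 by simp
      hence "(y - C) * (y - B) * poly v y \<le> 0" using pP pP' by simp
      moreover have "(y - C) * (y - B) < 0" using 2 by (simp add: mult_neg_pos)
      ultimately show ?thesis by (simp add: mult_le_0_iff)
    next
      case 3
      have "c * (E - y)^(2*n) * (y - A) \<le> 1" using case1_out[OF AB' BC CZ nEc(2,3,4,5), of y] y 3 by simp
      hence "0 \<le> (y - C) * (y - B) * poly v y" using pP pP' by simp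
      moreover have "(y - C) * (y - B) > 0" using 3 BC by simp
      ultimately show ?thesis by (simp add: zero_le_mult_iff)
    qed
  qed
  have vmlc: "v \<in> mlc A Z" by (rule posstz_thm[OF AZ' vnn])
  have "v * [:-A,1:] \<in> Q"
  proof (rule mlc_qmodule[OF vmlc l1Q])
    show "[:-A,1:] * [:-A,1:] \<in> Q" using qmodule_sos[OF sos_sq[of "[:-A,1:]"]] by (simp add: power2_eq_square)
    show "[:Z,-1:] * [:-A,1:] \<in> Q" using pair_l1l2 by (simp add: mult.commute)
  qed
  moreover have "u * ([:-C,1:] * [:-B,1:]) \<in> Q" by (rule qmodule_sos_mult[OF usos qmodule_gen[OF fin qS]])
  ultimately show ?thesis using lemmaG[OF e] by blast
qed

lemma pair_ql2:
  assumes AB: "A \<le> B" and BC: "B < C" and CZ: "C \<le> Z" and qS: "[:-C,1:] * [:-B,1:] \<in> S"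
  shows "([:-C,1:] * [:-B,1:]) * [:Z,-1:] \<in> Q"
proof (cases "C = Z")
  case True
  have "([:-C,1:] * [:-B,1:]) * [:Z,-1:] = [:-B,1:]^2 * [:Z,-1:] + [:Z - B:] * ([:-C,1:] * [:-B,1:])"
    by (rule poly_ext) (simp add: True power2_eq_square algebra_simps)
  also have "\<dots> \<in> Q"
    by (intro qmodule_add qmodule_sos_mult l2Q sos_sq sos_const_nonneg qmodule_gen[OF fin qS]) (use BC True in simp)
  finally show ?thesis .
next
  case False
  hence CZ': "C < Z" using CZ by simp
  have AZ': "A < Z" using AB BC CZ' by simp
  have h1: "-Z < -C" "-C < -B" "-B \<le> -A" using CZ' BC AB by auto
  obtain n E1 c where nEc: "0 < n" "- A < E1" "0 < c" "c * (E1 - - C)^(2*n) * (- C - - Z) = 1"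
      "c * (E1 - - B)^(2*n) * (- B - - Z) = 1"
    using exist1[OF h1] by blast
  define u where "u = [:c:] * [:E1,1:]^(2*n)"
  have usos: "u \<in> sos"
  proof -
    have "u = [:c:] * ([:E1,1:]^n)^2" by (simp add: u_def power_mult[symmetric] mult.commute)
    thus ?thesis using sos_poly_sq nEc by simp
  qed
  define P where "P = 1 - u * [:Z,-1:]"
  have pP': "\<And>y. poly P y = 1 - c * (E1 + y)^(2*n) * (Z - y)"
    by (simp add: P_def u_def algebra_simps)
  have "poly P B = 0" "poly P C = 0" using nEc by (simp_all add: pP')
  then obtain v where v: "P = [:-C,1:] * [:-B,1:] * v" using div2 BC by (metis less_irrefl)
  have e: "u * [:Z,-1:] + v * ([:-C,1:] * [:-B,1:]) = 1" using v by (simp add: P_def algebra_simps)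
  have vnn: "poly v x \<ge> 0" if x: "A \<le> x" "x \<le> Z" for x
  proof (rule nonneg_except2[OF AZ' _ x, of B C])
    fix y assume y: "A \<le> y" "y \<le> Z" "y \<noteq> B" "y \<noteq> C"
    have pP: "poly P y = (y - C) * (y - B) * poly v y" unfolding v by (simp add: algebra_simps)
    have out: "c * (E1 + y)^(2*n) * (Z - y) \<le> 1" if "y \<le> B \<or> C \<le> y"
    proof -
      have "c * (E1 - - y)^(2*n) * (- y - - Z) \<le> 1"
        by (rule case1_out[OF h1 nEc(2,3,4,5)]) (use y that in auto)
      thus ?thesis by simp
    qed
    have inn: "c * (E1 + y)^(2*n) * (Z - y) \<ge> 1" if "B \<le> y" "y \<le> C"
    proof -
      have "c * (E1 - - y)^(2*n) * (- y - - Z) \<ge> 1"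
        by (rule case1_in[OF h1 nEc(2,3,4,5)]) (use y that in auto)
      thus ?thesis by simp
    qed
    consider "y < B" | "B < y \<and> y < C" | "C < y" using y by linarith
    thus "poly v y \<ge> 0"
    proof cases
      case 1
      have "0 \<le> (y - C) * (y - B) * poly v y" using pP pP' out 1 by simp
      moreover have "(y - C) * (y - B) > 0" using 1 BC by (simp add: mult_neg_neg)
      ultimately show ?thesis by (simp add: zero_le_mult_iff)
    next
      case 2
      have "(y - C) * (y - B) * poly v y \<le> 0" using pP pP' inn 2 by simp
      moreover have "(y - C) * (y - B) < 0" using 2 by (simp add: mult_neg_pos)
      ultimately show ?thesis by (simp add: mult_le_0_iff)
    next
      case 3
      have "0 \<le> (y - C) * (y - B) * poly v y" using pP pP' out 3 by simp
      moreover have "(y - C) * (y - B) > 0" using 3 BC by simp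
      ultimately show ?thesis by (simp add: zero_le_mult_iff)
    qed
  qed
  have vmlc: "v \<in> mlc A Z" by (rule posstz_thm[OF AZ' vnn])
  have "v * [:Z,-1:] \<in> Q"
  proof (rule mlc_qmodule[OF vmlc l2Q])
    show "[:Z,-1:] * [:Z,-1:] \<in> Q" using qmodule_sos[OF sos_sq[of "[:Z,-1:]"]] by (simp add: power2_eq_square)
    show "[:-A,1:] * [:Z,-1:] \<in> Q" by (rule pair_l1l2)
  qed
  moreover have "u * ([:-C,1:] * [:-B,1:]) \<in> Q" by (rule qmodule_sos_mult[OF usos qmodule_gen[OF fin qS]])
  ultimately have "[:Z,-1:] * ([:-C,1:] * [:-B,1:]) \<in> Q" using lemmaG[OF e] by blast
  thus ?thesis by (simp add: mult.commute)
qed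

lemma pair_qq:
  assumes o1: "A \<le> B1" and o2: "B1 < C1" and o3: "C1 \<le> B2" and o4: "B2 < C2" and o5: "C2 \<le> Z"
    and q1S: "[:-C1,1:] * [:-B1,1:] \<in> S" and q2S: "[:-C2,1:] * [:-B2,1:] \<in> S"
  shows "([:-C1,1:] * [:-B1,1:]) * ([:-C2,1:] * [:-B2,1:]) \<in> Q"
proof (cases "C1 = B2")
  case True
  define lam where "lam = (C1 - B1) / (C2 - B1)"
  define mu where "mu = (C2 - C1) / (C2 - B1)"
  have lam: "0 \<le> lam" and mu: "0 \<le> mu" using o2 o3 o4 by (auto simp: lam_def mu_def)
  have d: "0 < C2 - B1" using o2 o3 o4 by simp
  have "([:-C1,1:] * [:-B1,1:]) * ([:-C2,1:] * [:-B2,1:])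
      = [:lam:] * [:-C2,1:]^2 * ([:-C1,1:] * [:-B1,1:]) + [:mu:] * [:-B1,1:]^2 * ([:-C2,1:] * [:-B2,1:])"
  proof (rule poly_ext)
    fix x
    have k: "lam * (x - C2) + mu * (x - B1) = x - C1"
    proof -
      have l1: "lam * (C2 - B1) = C1 - B1" using d by (simp add: lam_def)
      have m1: "mu * (C2 - B1) = C2 - C1" using d by (simp add: mu_def)
      have "(lam * (x - C2) + mu * (x - B1)) * (C2 - B1) = (lam * (C2 - B1)) * (x - C2) + (mu * (C2 - B1)) * (x - B1)"
        by (simp add: algebra_simps)
      also have "\<dots> = (C1 - B1) * (x - C2) + (C2 - C1) * (x - B1)" unfolding l1 m1 ..
      also have "\<dots> = (x - C1) * (C2 - B1)" by (simp add: algebra_simps)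
      finally show ?thesis using d by simp
    qed
    have "poly ([:lam:] * [:-C2,1:]^2 * ([:-C1,1:] * [:-B1,1:]) + [:mu:] * [:-B1,1:]^2 * ([:-C2,1:] * [:-B2,1:])) x
        = (x - C1) * (x - B1) * (x - C2) * (lam * (x - C2) + mu * (x - B1))"
      by (simp add: True power2_eq_square algebra_simps)
    also have "\<dots> = poly (([:-C1,1:] * [:-B1,1:]) * ([:-C2,1:] * [:-B2,1:])) x"
      unfolding k by (simp add: True algebra_simps)
    finally show "poly (([:-C1,1:] * [:-B1,1:]) * ([:-C2,1:] * [:-B2,1:])) x
        = poly ([:lam:] * [:-C2,1:]^2 * ([:-C1,1:] * [:-B1,1:]) + [:mu:] * [:-B1,1:]^2 * ([:-C2,1:] * [:-B2,1:])) x"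
      by simp
  qed
  also have "\<dots> \<in> Q"
    by (intro qmodule_add qmodule_sos_mult sos_poly_sq lam mu qmodule_gen[OF fin q1S] qmodule_gen[OF fin q2S])
  finally show ?thesis .
next
  case False
  hence o3': "C1 < B2" using o3 by simp
  have AZ': "A < Z" using o1 o2 o3' o4 o5 by simp
  obtain m n E c where mnEc: "Z < E" "0 < c"
      "c * (B2 - A)^(2*m) * (E - B2)^(2*n) * ((B2 - B1) * (B2 - C1)) = 1"
      "c * (C2 - A)^(2*m) * (E - C2)^(2*n) * ((C2 - B1) * (C2 - C1)) = 1"
      "\<forall>x. A \<le> x \<and> x \<le> B1 \<longrightarrow> c * (x - A)^(2*m) * (E - x)^(2*n) * ((x - B1) * (x - C1)) \<le> 1"
    using exist3[OF o1 o2 o3' o4 o5] by blast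
  define u where "u = [:c:] * [:-A,1:]^(2*m) * [:E,-1:]^(2*n)"
  have usos: "u \<in> sos"
  proof -
    have "u = [:c:] * ([:-A,1:]^m * [:E,-1:]^n)^2"
      by (simp add: u_def power_mult_distrib power_mult[symmetric] mult.commute mult.left_commute)
    thus ?thesis using sos_poly_sq mnEc by simp
  qed
  define P where "P = 1 - u * ([:-C1,1:] * [:-B1,1:])"
  have pP': "\<And>y. poly P y = 1 - c * (y - A)^(2*m) * (E - y)^(2*n) * ((y - B1) * (y - C1))"
    by (simp add: P_def u_def algebra_simps)
  have "poly P B2 = 0" "poly P C2 = 0" using mnEc by (simp_all add: pP')
  then obtain v where v: "P = [:-C2,1:] * [:-B2,1:] * v" using div2 o4 by (metis less_irrefl)
  have e: "u * ([:-C1,1:] * [:-B1,1:]) + v * ([:-C2,1:] * [:-B2,1:]) = 1" using v by (simp add: P_def algebra_simps)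
  have vnn: "poly v x \<ge> 0" if x: "A \<le> x" "x \<le> Z" for x
  proof (rule nonneg_except2[OF AZ' _ x, of B2 C2])
    fix y assume y: "A \<le> y" "y \<le> Z" "y \<noteq> B2" "y \<noteq> C2"
    have pP: "poly P y = (y - C2) * (y - B2) * poly v y" unfolding v by (simp add: algebra_simps)
    note out = case3_out[OF o1 o2 o3' o4 o5 mnEc, of y]
    note inn = case3_in[OF o1 o2 o3' o4 o5 mnEc, of y]
    consider "y < B2" | "B2 < y \<and> y < C2" | "C2 < y" using y by linarith
    thus "poly v y \<ge> 0"
    proof cases
      case 1
      have "0 \<le> (y - C2) * (y - B2) * poly v y" using pP pP' out 1 y by simp
      moreover have "(y - C2) * (y - B2) > 0" using 1 o4 by (simp add: mult_neg_neg)
      ultimately show ?thesis by (simp add: zero_le_mult_iff)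
    next
      case 2
      have "(y - C2) * (y - B2) * poly v y \<le> 0" using pP pP' inn 2 by simp
      moreover have "(y - C2) * (y - B2) < 0" using 2 by (simp add: mult_neg_pos)
      ultimately show ?thesis by (simp add: mult_le_0_iff)
    next
      case 3
      have "0 \<le> (y - C2) * (y - B2) * poly v y" using pP pP' out 3 y by simp
      moreover have "(y - C2) * (y - B2) > 0" using 3 o4 by simp
      ultimately show ?thesis by (simp add: zero_le_mult_iff)
    qed
  qed
  have vmlc: "v \<in> mlc A Z" by (rule posstz_thm[OF AZ' vnn])
  have "v * ([:-C1,1:] * [:-B1,1:]) \<in> Q"
  proof (rule mlc_qmodule[OF vmlc qmodule_gen[OF fin q1S]])
    show "[:-A,1:] * ([:-C1,1:] * [:-B1,1:]) \<in> Q" by (rule pair_l1q) (use o1 o2 o3 o4 o5 q1S in auto)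
    have "([:-C1,1:] * [:-B1,1:]) * [:Z,-1:] \<in> Q" by (rule pair_ql2) (use o1 o2 o3 o4 o5 q1S in auto)
    thus "[:Z,-1:] * ([:-C1,1:] * [:-B1,1:]) \<in> Q" by (simp add: mult.commute)
  qed
  moreover have "u * ([:-C2,1:] * [:-B2,1:]) \<in> Q" by (rule qmodule_sos_mult[OF usos qmodule_gen[OF fin q2S]])
  ultimately show ?thesis using lemmaG[OF e] by blast
qed

end


lemma ab_le:
  fixes a b :: "nat \<Rightarrow> real"
  assumes ord1: "\<And>i. 1 \<le> i \<Longrightarrow> i \<le> k \<Longrightarrow> a i \<le> b i"
    and ord2: "\<And>i. 1 \<le> i \<Longrightarrow> i < k \<Longrightarrow> b i < a (i + 1)"
  shows "1 \<le> i \<Longrightarrow> i \<le> j \<Longrightarrow> j \<le> k \<Longrightarrow> a i \<le> b j"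
proof (induct j)
  case 0 thus ?case by simp
next
  case (Suc j)
  show ?case
  proof (cases "i = Suc j")
    case True thus ?thesis using ord1 Suc by simp
  next
    case False
    hence ij: "i \<le> j" using Suc by simp
    hence "a i \<le> b j" using Suc by simp
    also have "b j < a (j + 1)" using ord2[of j] ij Suc by simp
    also have "a (j + 1) \<le> b (Suc j)" using ord1[of "Suc j"] Suc by simp
    finally show ?thesis by simp
  qed
qed

lemma ba_lt:
  fixes a b :: "nat \<Rightarrow> real"
  assumes ord1: "\<And>i. 1 \<le> i \<Longrightarrow> i \<le> k \<Longrightarrow> a i \<le> b i"
    and ord2: "\<And>i. 1 \<le> i \<Longrightarrow> i < k \<Longrightarrow> b i < a (i + 1)"
    and ij: "1 \<le> i" "i < j" "j \<le> k"
  shows "b i < a j"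
proof (cases "i + 1 = j")
  case True thus ?thesis using ord2[of i] ij by simp
next
  case False
  have "b i < a (i + 1)" using ord2[of i] ij by simp
  also have "a (i + 1) \<le> b (j - 1)" by (rule ab_le[where k=k and a=a and b=b, OF ord1 ord2]) (use ij False in auto)
  also have "b (j - 1) < a (j - 1 + 1)" by (rule ord2) (use ij False in auto)
  also have "j - 1 + 1 = j" using ij by simp
  finally show ?thesis .
qed

theorem lemma1:
  fixes k :: nat and a b :: "nat \<Rightarrow> real"
  assumes "k \<ge> 1"
    and "\<And>i. 1 \<le> i \<Longrightarrow> i \<le> k \<Longrightarrow> a i \<le> b i"
    and "\<And>i. 1 \<le> i \<Longrightarrow> i < k \<Longrightarrow> b i < a (i + 1)"
  shows "preordering (nat_gens k a b) = qmodule (nat_gens k a b)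
         \<and> preordering ((\<lambda>p. [:p:]) ` nat_gens k a b :: real poly poly set)
             = qmodule ((\<lambda>p. [:p:]) ` nat_gens k a b)"
proof -
  note k1 = assms(1) and ord1 = assms(2) and ord2 = assms(3)
  define S where "S = nat_gens k a b"
  define q where "q i = [:-a i,1:] * [:-b (i - 1),1:]" for i
  have Sq: "{[:- a i, 1:] * [:- b (i - 1), 1:] | i. 2 \<le> i \<and> i \<le> k} = q ` {2..k}"
    by (auto simp: q_def)
  have Seq: "S = insert [:-a 1,1:] (insert [:b k,-1:] (q ` {2..k}))"
    unfolding S_def nat_gens_def Sq by auto
  have fin: "finite S" unfolding Seq by simp
  have AZ: "a 1 \<le> b k" by (rule ab_le[where k=k and a=a and b=b, OF ord1 ord2]) (use k1 in auto)
  interpret G: gens S "a 1" "b k"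
    by unfold_locales (use fin AZ Seq in auto)
  have qS: "q i \<in> S" if "2 \<le> i" "i \<le> k" for i using that Seq by auto
  have oA: "a 1 \<le> b (i - 1)" if "2 \<le> i" "i \<le> k" for i by (rule ab_le[where k=k and a=a and b=b, OF ord1 ord2]) (use that in auto)
  have oBC: "b (i - 1) < a i" if "2 \<le> i" "i \<le> k" for i
    using ord2[of "i - 1"] that by simp
  have oZ: "a i \<le> b k" if "2 \<le> i" "i \<le> k" for i by (rule ab_le[where k=k and a=a and b=b, OF ord1 ord2]) (use that in auto)
  have oCB: "a i \<le> b (j - 1)" if "2 \<le> i" "i < j" "j \<le> k" for i j
    by (rule ab_le[where k=k and a=a and b=b, OF ord1 ord2]) (use that in auto)
  have sq: "s * s \<in> qmodule S" for s using qmodule_sos[OF sos_sq[of s]] by (simp add: power2_eq_square)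
  have l1q: "[:-a 1,1:] * q i \<in> qmodule S" if "2 \<le> i" "i \<le> k" for i
    unfolding q_def by (rule G.pair_l1q) (use oA oBC oZ qS that in \<open>auto simp: q_def\<close>)
  have ql2: "q i * [:b k,-1:] \<in> qmodule S" if "2 \<le> i" "i \<le> k" for i
    unfolding q_def by (rule G.pair_ql2) (use oA oBC oZ qS that in \<open>auto simp: q_def\<close>)
  have qq: "q i * q j \<in> qmodule S" if "2 \<le> i" "i < j" "j \<le> k" for i j
    unfolding q_def
  proof (rule G.pair_qq)
    show "a 1 \<le> b (i - 1)" "b (i - 1) < a i" using oA oBC that by auto
    show "a i \<le> b (j - 1)" using oCB that by auto
    show "b (j - 1) < a j" "a j \<le> b k" using oBC oZ that by auto
    show "[:- a i, 1:] * [:- b (i - 1), 1:] \<in> S" "[:- a j, 1:] * [:- b (j - 1), 1:] \<in> S"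
      using qS[of i] qS[of j] that by (auto simp: q_def)
  qed
  have pw: "s * t \<in> qmodule S" if s: "s \<in> S" and t: "t \<in> S" for s t
  proof -
    have cs: "s = [:-a 1,1:] \<or> s = [:b k,-1:] \<or> (\<exists>i. 2 \<le> i \<and> i \<le> k \<and> s = q i)" using s Seq by auto
    have ct: "t = [:-a 1,1:] \<or> t = [:b k,-1:] \<or> (\<exists>i. 2 \<le> i \<and> i \<le> k \<and> t = q i)" using t Seq by auto
    from cs ct show ?thesis
    proof (elim disjE exE conjE)
      show "s = [:- a 1, 1:] \<Longrightarrow> t = [:- a 1, 1:] \<Longrightarrow> s * t \<in> qmodule S" using sq[of s] by simp
      show "s = [:- a 1, 1:] \<Longrightarrow> t = [:b k, - 1:] \<Longrightarrow> s * t \<in> qmodule S" using G.pair_l1l2 by simp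
      show "s = [:b k, - 1:] \<Longrightarrow> t = [:- a 1, 1:] \<Longrightarrow> s * t \<in> qmodule S" using G.pair_l1l2 by (simp add: mult.commute)
      show "s = [:b k, - 1:] \<Longrightarrow> t = [:b k, - 1:] \<Longrightarrow> s * t \<in> qmodule S" using sq[of s] by simp
      show "\<And>i. s = [:- a 1, 1:] \<Longrightarrow> 2 \<le> i \<Longrightarrow> i \<le> k \<Longrightarrow> t = q i \<Longrightarrow> s * t \<in> qmodule S"
        using l1q by simp
      show "\<And>i. s = [:b k, - 1:] \<Longrightarrow> 2 \<le> i \<Longrightarrow> i \<le> k \<Longrightarrow> t = q i \<Longrightarrow> s * t \<in> qmodule S"
        using ql2 by (simp add: mult.commute)
      show "\<And>i. 2 \<le> i \<Longrightarrow> i \<le> k \<Longrightarrow> s = q i \<Longrightarrow> t = [:- a 1, 1:] \<Longrightarrow> s * t \<in> qmodule S"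
        using l1q by (simp add: mult.commute)
      show "\<And>i. 2 \<le> i \<Longrightarrow> i \<le> k \<Longrightarrow> s = q i \<Longrightarrow> t = [:b k, - 1:] \<Longrightarrow> s * t \<in> qmodule S"
        using ql2 by simp
      show "\<And>i j. 2 \<le> i \<Longrightarrow> i \<le> k \<Longrightarrow> s = q i \<Longrightarrow> 2 \<le> j \<Longrightarrow> j \<le> k \<Longrightarrow> t = q j \<Longrightarrow> s * t \<in> qmodule S"
      proof -
        fix i j assume h: "2 \<le> i" "i \<le> k" "s = q i" "2 \<le> j" "j \<le> k" "t = q j"
        consider "i = j" | "i < j" | "j < i" by linarith
        thus "s * t \<in> qmodule S"
        proof cases
          case 1 thus ?thesis using h sq[of s] by simp
        next
          case 2 thus ?thesis using h qq by simp
        next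
          case 3 thus ?thesis using h qq[of j i] by (simp add: mult.commute)
        qed
      qed
    qed
  qed
  have part1: "preordering S = qmodule S" by (rule preordering_eq_qmodule[OF fin pw])
  define S' where "S' = ((\<lambda>p. [:p:]) ` S :: real poly poly set)"
  have fin': "finite S'" using fin by (simp add: S'_def)
  have pw': "s * t \<in> qmodule S'" if s: "s \<in> S'" and t: "t \<in> S'" for s t
  proof -
    obtain s0 t0 where st: "s0 \<in> S" "t0 \<in> S" "s = [:s0:]" "t = [:t0:]" using s t by (auto simp: S'_def)
    have "[:s0 * t0:] \<in> qmodule S'" unfolding S'_def by (rule qmodule_const[OF pw[OF st(1,2)]])
    moreover have "s * t = [:s0 * t0:]" using st by (simp add: const_mult)
    ultimately show ?thesis by simp
  qed
  have part2: "preordering S' = qmodule S'" by (rule preordering_eq_qmodule[OF fin' pw'])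
  show ?thesis using part1 part2 by (simp add: S_def S'_def)
qed


end
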